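(* Let $\Gamma$ be a reachability-price game on a simple single-clock timed automaton (in the setting described in the context), and let $I_1=[b_1,r]$ and $I_2=[r,e_2]$ be intervals contained in $[0,1]$. Let $\Gamma'_{I_1}=\mathrm{CostConsistent}(\Gamma_{I_1},\mathrm{OptCost}_{\Gamma_{I_2}})$. Then for every location $l$ of $\Gamma$ and every $x\in I_1\cup I_2$, $$\big(\mathrm{OptCost}_{\Gamma'_{I_1}}\oplus\mathrm{OptCost}_{\Gamma_{I_2}}\big)(l,x)=\mathrm{OptCost}_{\Gamma_{I_1\cup I_2}}(l,x),$$ i.e. $\mathrm{OptCost}_{\Gamma_{I_1\cup I_2}}(l,x)$ equals $\mathrm{OptCost}_{\Gamma'_{I_1}}(l,x)$ for $x\in I_1$ and equals $\mathrm{OptCost}_{\Gamma_{I_2}}(l,x)$ for $x\in I_2\setminus I_1$.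
   Context: Setting: a game $\Gamma$ consists of a finite set of locations $L=L^{\mathrm{Min}}\cup L^{\mathrm{Max}}$ (disjoint), goal locations $L^{\mathrm{Goal}}\subseteq L$ each assigned a cost function (continuous, non-increasing, piecewise affine with finitely many pieces, real-valued), an edge set $E\subseteq L\times L$ (all guards true, no resets, discrete transitions have price $0$), an urgency map $\mathrm{urg}:L\to\{0,1\}$ and price rates $\pi:L\to\mathbb{N}$. For an interval $J=[b,e]\subseteq[0,1]$, the restricted game $\Gamma_J$ has states $L\times J$, goal cost functions restricted to $J$, discrete transitions $(l,x)\to(l',x)$ for $(l,l')\in E$ with price $0$, and continuous transitions $(l,x)\xrightarrow{t}(l,x+t)$ for $t>0$, $\mathrm{urg}(l)=0$, $x+t\le e$, with price $\pi(l)t$. Runs are finite or infinite sequences of consecutive transitions, not containing infinitely many consecutive continuous transitions. Strategies of the minimizer (maximizer) map finite runs ending in states with location in $L^{\mathrm{Min}}$ ($L^{\mathrm{Max}}$) to an available transition; $\mathrm{Run}(s,\mu,\chi)$ is the unique resulting run. The cost of a run that first visits a goal location $l$ at state $(l,x)$ after $n$ transitions is (goal cost function of $l$)$(x)$ plus the sum of the prices of the first $n$ transitions, and $\infty$ if no goal location is visited. $\mathrm{OptCost}_{\Gamma_J}(s)=\inf_\mu\sup_\chi\mathrm{Cost}(\mathrm{Run}(s,\mu,\chi))$; it is assumed finite from every state. A location $l$ is non-urgent if $l\notin L^{\mathrm{Goal}}$ and $\mathrm{urg}(l)=0$. Override: for $h:D_1\to\mathbb{R}$, $g:D_2\to\mathbb{R}$,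 $(h\oplus g)(z)=h(z)$ if $z\in D_1$ and $g(z)$ if $z\in D_2\setminus D_1$. $\Gamma[L^{\mathrm{Goal}}\cup l,h]$ denotes the game obtained by adding $l$ (possibly a fresh location) to the goal locations with cost function $h$ (overriding any previous one); $\Gamma[E\cup e]$ adds edge $e$. $\mathrm{CostConsistent}(\Gamma_{I_1},\mathrm{OptCost}_{\Gamma_{I_2}})$, for $I_1=[b_1,r]$, $I_2=[r,e_2]$, is obtained from $\Gamma$ by, for each non-urgent location $l_i$ of $\Gamma$ ($i=1,\dots,k$), adding a fresh goal location $l_i'$ with cost function $x\mapsto\mathrm{OptCost}_{\Gamma_{I_2}}(l_i,r)+(r-x)\pi(l_i)$ and adding the edge $(l_i,l_i')$, and then restricting the resulting game to $I_1$. *)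

theory Defs
  imports "HOL-Analysis.Analysis" "HOL-Library.Extended_Real"
begin

record 'l game =
  Lmin   :: "'l set"
  Lmax   :: "'l set"
  goal   :: "'l \<Rightarrow> (real \<Rightarrow> real) option"  \<comment> \<open>Some f iff l is a goal location with cost function f\<close>
  edges  :: "('l \<times> 'l) set"
  urgent :: "'l \<Rightarrow> bool"
  rate   :: "'l \<Rightarrow> nat"

definition locs :: "('l, 'b) game_scheme \<Rightarrow> 'l set" where
  "locs G = Lmin G \<union> Lmax G"

definition piecewise_affine01 :: "(real \<Rightarrow> real) \<Rightarrow> bool" where
  "piecewise_affine01 f \<longleftrightarrow>
     (\<exists>ps::real list. ps \<noteq> [] \<and> hd ps = 0 \<and> last ps = 1 \<and> sorted ps \<and>
        (\<forall>i. Suc i < length ps \<longrightarrow>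
           (\<exists>a c. \<forall>x\<in>{ps ! i .. ps ! Suc i}. f x = a * x + c)))"

definition simple_game :: "'l game \<Rightarrow> bool" where
  "simple_game G \<longleftrightarrow>
     finite (Lmin G) \<and> finite (Lmax G) \<and> Lmin G \<inter> Lmax G = {} \<and>
     edges G \<subseteq> locs G \<times> locs G \<and>
     (\<forall>l f. goal G l = Some f \<longrightarrow>
        l \<in> locs G \<and> continuous_on {0..1} f \<and> antimono_on {0..1} f \<and> piecewise_affine01 f)"

definition nonurgent :: "'l game \<Rightarrow> 'l \<Rightarrow> bool" where
  "nonurgent G l \<longleftrightarrow> l \<in> locs G \<and> goal G l = None \<and> \<not> urgent G l"

type_synonym 'l state = "'l \<times> real"

definition succ :: "'l game \<Rightarrow> real \<Rightarrow> 'l state \<Rightarrow> 'l state \<Rightarrow> bool" where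
  "succ G e s s' \<longleftrightarrow>
     ((fst s, fst s') \<in> edges G \<and> snd s' = snd s) \<or>
     (\<not> urgent G (fst s) \<and> fst s' = fst s \<and> snd s < snd s' \<and> snd s' \<le> e)"

type_synonym 'l strategy = "'l state list \<Rightarrow> 'l state"

text \<open>A strategy of the player owning locations P picks an available transition
  (given as its target state) whenever one is available.\<close>
definition valid_strat :: "'l game \<Rightarrow> real \<Rightarrow> 'l set \<Rightarrow> 'l strategy \<Rightarrow> bool" where
  "valid_strat G e P \<sigma> \<longleftrightarrow>
     (\<forall>h. h \<noteq> [] \<and> fst (last h) \<in> P \<and> (\<exists>s'. succ G e (last h) s') \<longrightarrow> succ G e (last h) (\<sigma> h))"

text \<open>The history after n steps of the play from s (it stops growing once no transition
  is available, i.e. the run is finite).\<close>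
fun hist :: "'l game \<Rightarrow> real \<Rightarrow> 'l state \<Rightarrow> 'l strategy \<Rightarrow> 'l strategy \<Rightarrow> nat \<Rightarrow> 'l state list" where
  "hist G e s mu chi 0 = [s]"
| "hist G e s mu chi (Suc n) =
     (let h = hist G e s mu chi n; c = last h in
      if \<exists>s'. succ G e c s'
      then h @ [if fst c \<in> Lmin G then mu h else chi h]
      else h)"

definition pos :: "'l game \<Rightarrow> real \<Rightarrow> 'l state \<Rightarrow> 'l strategy \<Rightarrow> 'l strategy \<Rightarrow> nat \<Rightarrow> 'l state" where
  "pos G e s mu chi n = last (hist G e s mu chi n)"

text \<open>The play ends with infinitely many consecutive continuous transitions in a location of P
  (continuous transitions are exactly those that increase the clock).\<close>
definition zeno_tail :: "'l game \<Rightarrow> real \<Rightarrow> 'l state \<Rightarrow> 'l strategy \<Rightarrow> 'l strategy \<Rightarrow> 'l set \<Rightarrow> bool" where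
  "zeno_tail G e s mu chi P \<longleftrightarrow>
     (\<exists>N. fst (pos G e s mu chi N) \<in> P \<and>
          (\<forall>i\<ge>N. snd (pos G e s mu chi i) < snd (pos G e s mu chi (Suc i))))"

definition min_strat :: "'l game \<Rightarrow> real \<Rightarrow> 'l state \<Rightarrow> 'l strategy \<Rightarrow> bool" where
  "min_strat G e s mu \<longleftrightarrow> valid_strat G e (Lmin G) mu \<and>
     (\<forall>chi. valid_strat G e (Lmax G) chi \<longrightarrow> \<not> zeno_tail G e s mu chi (Lmin G))"

definition max_strat :: "'l game \<Rightarrow> real \<Rightarrow> 'l state \<Rightarrow> 'l strategy \<Rightarrow> bool" where
  "max_strat G e s chi \<longleftrightarrow> valid_strat G e (Lmax G) chi \<and>
     (\<forall>mu. valid_strat G e (Lmin G) mu \<longrightarrow> \<not> zeno_tail G e s mu chi (Lmax G))"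

definition cost :: "'l game \<Rightarrow> real \<Rightarrow> 'l state \<Rightarrow> 'l strategy \<Rightarrow> 'l strategy \<Rightarrow> ereal" where
  "cost G e s mu chi =
     (let p = pos G e s mu chi in
      if \<exists>n. goal G (fst (p n)) \<noteq> None then
        (let n = (LEAST n. goal G (fst (p n)) \<noteq> None) in
          ereal (the (goal G (fst (p n))) (snd (p n)) +
                 (\<Sum>i<n. real (rate G (fst (p i))) * (snd (p (Suc i)) - snd (p i)))))
      else \<infinity>)"

text \<open>OptCost of the restricted game \<Gamma>_[b,e] at state s (meaningful for snd s in [b,e]).\<close>
definition OptCost :: "'l game \<Rightarrow> real \<Rightarrow> real \<Rightarrow> 'l state \<Rightarrow> ereal" where
  "OptCost G b e s =
     (INF mu\<in>{mu. min_strat G e s mu}. SUP chi\<in>{chi. max_strat G e s chi}. cost G e s mu chi)"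

definition override :: "'a set \<Rightarrow> ('a \<Rightarrow> 'b) \<Rightarrow> ('a \<Rightarrow> 'b) \<Rightarrow> 'a \<Rightarrow> 'b" where
  "override D1 h g z = (if z \<in> D1 then h z else g z)"

text \<open>CostConsistent(\<Gamma>_[b1,r], OptCost_\<Gamma>_[r,e2]) before restriction to [b1,r]
  (the restriction is applied by evaluating OptCost with interval [b1,r]).
  Original locations are Inl l; the fresh goal location l' of a non-urgent l is Inr l.\<close>
definition cost_consistent :: "'l game \<Rightarrow> real \<Rightarrow> real \<Rightarrow> ('l + 'l) game" where
  "cost_consistent G r e2 =
     \<lparr> Lmin = Inl ` Lmin G \<union> Inr ` {l. nonurgent G l},
       Lmax = Inl ` Lmax G,
       goal = (\<lambda>z. case z of
                  Inl l \<Rightarrow> goal G l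
                | Inr l \<Rightarrow> (if nonurgent G l then
                     Some (\<lambda>x. real_of_ereal (OptCost G r e2 (l, r)) + (r - x) * real (rate G l))
                   else None)),
       edges = (\<lambda>(a, b). (Inl a, Inl b)) ` edges G \<union> {(Inl l, Inr l) | l. nonurgent G l},
       urgent = (\<lambda>z. case z of Inl l \<Rightarrow> urgent G l | Inr l \<Rightarrow> True),
       rate = (\<lambda>z. case z of Inl l \<Rightarrow> rate G l | Inr l \<Rightarrow> 0) \<rparr>"

end

theory Submission
  imports Defs "HOL-Library.Sublist"
begin

definition hs :: "'l game \<Rightarrow> real \<Rightarrow> 'l state \<Rightarrow> bool" where
  "hs G e c \<longleftrightarrow> (\<exists>q. succ G e c q)"

lemma hist_Suc':
  "hist G e s mu chi (Suc n) =
    (if hs G e (pos G e s mu chi n)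
     then hist G e s mu chi n @ [(if fst (pos G e s mu chi n) \<in> Lmin G then mu else chi) (hist G e s mu chi n)]
     else hist G e s mu chi n)"
  by (simp add: hs_def pos_def Let_def)

declare hist.simps(2)[simp del]

lemma hist_ne[simp]: "hist G e s mu chi n \<noteq> []"
  by (induction n) (auto simp: Let_def hist.simps(2))

lemma hist_0[simp]: "hist G e s mu chi 0 = [s]" by simp

lemma pos_0[simp]: "pos G e s mu chi 0 = s" by (simp add: pos_def)

lemma pos_Suc:
  "pos G e s mu chi (Suc n) =
    (if hs G e (pos G e s mu chi n)
     then (if fst (pos G e s mu chi n) \<in> Lmin G then mu else chi) (hist G e s mu chi n)
     else pos G e s mu chi n)"
  unfolding pos_def[of G e s mu chi "Suc n"] by (subst hist_Suc') (simp add: pos_def)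

lemma hist_Suc_hs:
  "hs G e (pos G e s mu chi n) \<Longrightarrow> hist G e s mu chi (Suc n) = hist G e s mu chi n @ [pos G e s mu chi (Suc n)]"
  by (subst hist_Suc') (simp add: pos_Suc)

lemma hist_Suc_nhs:
  "\<not> hs G e (pos G e s mu chi n) \<Longrightarrow> hist G e s mu chi (Suc n) = hist G e s mu chi n"
  by (subst hist_Suc') simp

lemma hist_prefix_Suc: "prefix (hist G e s mu chi n) (hist G e s mu chi (Suc n))"
  by (cases "hs G e (pos G e s mu chi n)") (auto simp: hist_Suc_hs hist_Suc_nhs)

lemma hist_prefix: "n \<le> m \<Longrightarrow> prefix (hist G e s mu chi n) (hist G e s mu chi m)"
proof (induction m)
  case 0 then show ?case by simp
next
  case (Suc m)
  then show ?case
    by (metis hist_prefix_Suc le_Suc_eq prefix_order.dual_order.refl prefix_order.dual_order.trans)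
qed

lemma hist_hd: "hd (hist G e s mu chi n) = s"
  by (metis hd_Cons_tl hist_0 hist_ne hist_prefix le0 list.sel(1) prefix_Cons prefix_code(1))

lemma last_hist: "last (hist G e s mu chi n) = pos G e s mu chi n"
  by (simp add: pos_def)

lemma prefix_hist:
  assumes "prefix Q (hist G e s mu chi n)" "Q \<noteq> []"
  shows "\<exists>k\<le>n. hist G e s mu chi k = Q"
  using assms
proof (induction n)
  case 0 then show ?case by (auto simp: prefix_Cons)
next
  case (Suc n)
  show ?case
  proof (cases "hs G e (pos G e s mu chi n)")
    case True
    with Suc.prems have "prefix Q (hist G e s mu chi n @ [pos G e s mu chi (Suc n)])" by (simp add: hist_Suc_hs)
    then have "Q = hist G e s mu chi n @ [pos G e s mu chi (Suc n)] \<or> prefix Q (hist G e s mu chi n)"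
      by (simp add: prefix_snoc)
    then show ?thesis using Suc True by (metis hist_Suc_hs le_Suc_eq)
  next
    case False
    then have "prefix Q (hist G e s mu chi n)" using Suc.prems by (simp add: hist_Suc_nhs)
    then show ?thesis using Suc.IH Suc.prems(2) le_SucI by blast
  qed
qed

lemma hist_length: "length (hist G e s mu chi n) \<le> Suc n"
  by (induction n) (auto simp: hist_Suc')

lemma stuck_const:
  assumes "\<not> hs G e (pos G e s mu chi n)"
  shows "hist G e s mu chi (n + j) = hist G e s mu chi n"
proof (induction j)
  case 0 then show ?case by simp
next
  case (Suc j)
  then have "pos G e s mu chi (n+j) = pos G e s mu chi n" by (simp add: pos_def)
  then show ?case using Suc assms by (simp add: hist_Suc_nhs)
qed

lemma hist_agree:
  assumes "\<And>i. i < n \<Longrightarrow> hs G e (pos G e s mu chi i) \<Longrightarrow>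
      (if fst (pos G e s mu chi i) \<in> Lmin G then mu' else chi') (hist G e s mu chi i) =
      (if fst (pos G e s mu chi i) \<in> Lmin G then mu else chi) (hist G e s mu chi i)"
  shows "hist G e s mu' chi' n = hist G e s mu chi n"
  using assms
proof (induction n)
  case 0 then show ?case by simp
next
  case (Suc n)
  then have IH: "hist G e s mu' chi' n = hist G e s mu chi n" by auto
  then have P: "pos G e s mu' chi' n = pos G e s mu chi n" by (simp add: pos_def)
  show ?case
    using Suc.prems[of n] IH P by (auto simp: hist_Suc')
qed

lemma pos_agree:
  assumes "\<And>i. i < n \<Longrightarrow> hs G e (pos G e s mu chi i) \<Longrightarrow>
      (if fst (pos G e s mu chi i) \<in> Lmin G then mu' else chi') (hist G e s mu chi i) =
      (if fst (pos G e s mu chi i) \<in> Lmin G then mu else chi) (hist G e s mu chi i)"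
  shows "pos G e s mu' chi' n = pos G e s mu chi n"
  using hist_agree[OF assms] by (simp add: pos_def)

lemma hist_sim:
  fixes f :: "'a state \<Rightarrow> 'b state"
  assumes "f s1 = s2"
  and "\<And>i. i < n \<Longrightarrow> hist G2 e2 s2 mu2 chi2 i = map f (hist G1 e1 s1 mu1 chi1 i) \<Longrightarrow>
        (hs G2 e2 (f (pos G1 e1 s1 mu1 chi1 i)) \<longleftrightarrow> hs G1 e1 (pos G1 e1 s1 mu1 chi1 i)) \<and>
        (hs G1 e1 (pos G1 e1 s1 mu1 chi1 i) \<longrightarrow>
          (if fst (f (pos G1 e1 s1 mu1 chi1 i)) \<in> Lmin G2 then mu2 else chi2) (map f (hist G1 e1 s1 mu1 chi1 i))
          = f ((if fst (pos G1 e1 s1 mu1 chi1 i) \<in> Lmin G1 then mu1 else chi1) (hist G1 e1 s1 mu1 chi1 i)))"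
  shows "hist G2 e2 s2 mu2 chi2 n = map f (hist G1 e1 s1 mu1 chi1 n)"
  using assms(2)
proof (induction n)
  case 0 then show ?case using assms(1) by simp
next
  case (Suc n)
  then have IH: "hist G2 e2 s2 mu2 chi2 n = map f (hist G1 e1 s1 mu1 chi1 n)" by auto
  then have P: "pos G2 e2 s2 mu2 chi2 n = f (pos G1 e1 s1 mu1 chi1 n)"
    by (simp add: pos_def last_map)
  note C = Suc.prems[of n, OF _ IH]
  show ?case
  proof (cases "hs G1 e1 (pos G1 e1 s1 mu1 chi1 n)")
    case True
    then show ?thesis using C IH P
      by (simp add: hist_Suc_hs pos_Suc)
  next
    case False
    then show ?thesis using C IH P
      by (simp add: hist_Suc_nhs)
  qed
qed

lemma hist_glue:
  assumes "hist G e s mu chi k = P" "H0 \<noteq> []" "last H0 = last P"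
   "hist G e (hd H0) mu2 chi2 m = H0"
   "\<And>t. mu (P @ t) = mu2 (H0 @ t)" "\<And>t. chi (P @ t) = chi2 (H0 @ t)"
  shows "\<exists>t. hist G e s mu chi (k+j) = P @ t \<and> hist G e (hd H0) mu2 chi2 (m+j) = H0 @ t"
proof (induction j)
  case 0 then show ?case using assms by (intro exI[of _ "[]"]) simp
next
  case (Suc j)
  then obtain t where t: "hist G e s mu chi (k+j) = P @ t" "hist G e (hd H0) mu2 chi2 (m+j) = H0 @ t" by blast
  have P: "pos G e (hd H0) mu2 chi2 (m+j) = pos G e s mu chi (k+j)"
    using t assms(2,3) by (cases "t = []") (auto simp: pos_def)
  show ?case
  proof (cases "hs G e (pos G e s mu chi (k+j))")
    case True
    then show ?thesis using t P assms(5,6)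
      by (intro exI[of _ "t @ [pos G e s mu chi (Suc (k+j))]"])
         (simp add: hist_Suc_hs pos_Suc)
  next
    case False
    then show ?thesis using t P by (intro exI[of _ t]) (simp add: hist_Suc_nhs)
  qed
qed

lemma pos_glue:
  assumes "hist G e s mu chi k = P" "H0 \<noteq> []" "last H0 = last P"
   "hist G e (hd H0) mu2 chi2 m = H0"
   "\<And>t. mu (P @ t) = mu2 (H0 @ t)" "\<And>t. chi (P @ t) = chi2 (H0 @ t)"
  shows "pos G e s mu chi (k+j) = pos G e (hd H0) mu2 chi2 (m+j)"
proof -
  obtain t where t: "hist G e s mu chi (k+j) = P @ t" "hist G e (hd H0) mu2 chi2 (m+j) = H0 @ t"
    using hist_glue[OF assms] by blast
  then show ?thesis using assms(2,3) by (cases "t = []") (auto simp: pos_def)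
qed


abbreviation "owner G mu chi c \<equiv> (if fst c \<in> Lmin G then mu else chi)"

lemma succ_locs:
  assumes "succ G e c q" "fst c \<in> locs G" "edges G \<subseteq> locs G \<times> locs G"
  shows "fst q \<in> locs G"
  using assms unfolding succ_def by auto

lemma owner_step:
  assumes "valid_strat G e (Lmin G) mu" "valid_strat G e (Lmax G) chi" "fst c \<in> locs G"
    "hs G e c" "h \<noteq> []" "last h = c"
  shows "succ G e c (owner G mu chi c h)"
proof (cases "fst c \<in> Lmin G")
  case True
  then show ?thesis using assms(1,4,5,6) unfolding valid_strat_def hs_def by auto
next
  case False
  then have "fst c \<in> Lmax G" using assms(3) by (auto simp: locs_def)
  then show ?thesis using False assms(2,4,5,6) unfolding valid_strat_def hs_def by auto
qed

lemma play_valid: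
  assumes "valid_strat G e (Lmin G) mu" "valid_strat G e (Lmax G) chi" "fst s \<in> locs G"
    "edges G \<subseteq> locs G \<times> locs G"
  shows "fst (pos G e s mu chi n) \<in> locs G \<and>
    (hs G e (pos G e s mu chi n) \<longrightarrow> succ G e (pos G e s mu chi n) (pos G e s mu chi (Suc n))) \<and>
    (\<not> hs G e (pos G e s mu chi n) \<longrightarrow> pos G e s mu chi (Suc n) = pos G e s mu chi n)"
proof (induction n)
  case 0
  have "hs G e s \<Longrightarrow> succ G e s (owner G mu chi s [s])"
    using owner_step[OF assms(1,2,3)] by simp
  then show ?case using assms(3) by (auto simp: pos_Suc)
next
  case (Suc n)
  then have L: "fst (pos G e s mu chi (Suc n)) \<in> locs G"
    using succ_locs[OF _ _ assms(4)] by metis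
  let ?c = "pos G e s mu chi (Suc n)"
  have "hs G e ?c \<Longrightarrow> succ G e ?c (owner G mu chi ?c (hist G e s mu chi (Suc n)))"
    using owner_step[OF assms(1,2) L] by (simp add: last_hist)
  then show ?case using L by (auto simp: pos_Suc[of G e s mu chi "Suc n"])
qed

lemma succ_mono: "succ G e c q \<Longrightarrow> snd c \<le> snd q"
  unfolding succ_def by auto

lemma succ_inc: "succ G e c q \<Longrightarrow> snd c < snd q \<Longrightarrow> fst q = fst c \<and> \<not> urgent G (fst c) \<and> snd q \<le> e"
  unfolding succ_def by auto

definition csum :: "'l game \<Rightarrow> (nat \<Rightarrow> 'l state) \<Rightarrow> nat \<Rightarrow> real" where
  "csum G p n = (\<Sum>i<n. real (rate G (fst (p i))) * (snd (p (Suc i)) - snd (p i)))"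

definition gl :: "'l game \<Rightarrow> 'l state \<Rightarrow> bool" where
  "gl G q \<longleftrightarrow> goal G (fst q) \<noteq> None"

definition costp :: "'l game \<Rightarrow> (nat \<Rightarrow> 'l state) \<Rightarrow> ereal" where
  "costp G p = (if \<exists>n. gl G (p n) then
      (let n = (LEAST n. gl G (p n)) in ereal (the (goal G (fst (p n))) (snd (p n)) + csum G p n))
     else \<infinity>)"

lemma cost_costp: "cost G e s mu chi = costp G (pos G e s mu chi)"
  unfolding cost_def costp_def csum_def gl_def by (simp add: Let_def)

lemma costp_first:
  assumes "gl G (p n)" "\<And>i. i < n \<Longrightarrow> \<not> gl G (p i)"
  shows "costp G p = ereal (the (goal G (fst (p n))) (snd (p n)) + csum G p n)"
proof -
  have "(LEAST n. gl G (p n)) = n"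
    using assms by (metis (mono_tags, lifting) Least_equality linorder_not_le)
  then show ?thesis using assms unfolding costp_def by auto
qed

lemma costp_none: "(\<And>i. \<not> gl G (p i)) \<Longrightarrow> costp G p = \<infinity>"
  unfolding costp_def by auto

lemma csum_shift: "csum G p (k + n) = csum G p k + csum G (\<lambda>j. p (k + j)) n"
  unfolding csum_def by (induction n) auto

lemma costp_shift:
  assumes "\<And>i. i < k \<Longrightarrow> \<not> gl G (p i)"
  shows "costp G p = ereal (csum G p k) + costp G (\<lambda>j. p (k + j))"
proof (cases "\<exists>n. gl G (p n)")
  case True
  define n where "n = (LEAST n. gl G (p n))"
  have n: "gl G (p n)" "\<And>i. i < n \<Longrightarrow> \<not> gl G (p i)"
    using True n_def by (auto intro: LeastI_ex dest: not_less_Least)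
  have "k \<le> n" using n assms by (meson not_le)
  then obtain d where d: "n = k + d" using le_add_diff_inverse by metis
  have 1: "costp G p = ereal (the (goal G (fst (p n))) (snd (p n)) + csum G p n)"
    by (rule costp_first[where G=G and p=p and n=n, OF n])
  have 2: "costp G (\<lambda>j. p (k + j)) = ereal (the (goal G (fst (p n))) (snd (p n)) + csum G (\<lambda>j. p (k + j)) d)"
    using n d by (subst costp_first[where n=d]) auto
  show ?thesis using 1 2 d csum_shift[of G p k d] by simp
next
  case False
  then have "costp G p = \<infinity>" "costp G (\<lambda>j. p (k + j)) = \<infinity>" by (auto intro: costp_none)
  then show ?thesis by simp
qed

lemma costp_cong_upto:
  fixes p :: "nat \<Rightarrow> 'a state" and q :: "nat \<Rightarrow> 'b state"
  assumes "\<And>i. i \<le> n \<Longrightarrow> snd (q i) = snd (p i)"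
    and "\<And>i. i \<le> n \<Longrightarrow> goal G2 (fst (q i)) = goal G1 (fst (p i))"
    and "\<And>i. i < n \<Longrightarrow> rate G2 (fst (q i)) = rate G1 (fst (p i))"
    and "gl G1 (p n)"
  shows "costp G2 q = costp G1 p"
proof -
  define n0 where "n0 = (LEAST i. gl G1 (p i))"
  have n0: "gl G1 (p n0)" "\<And>i. i < n0 \<Longrightarrow> \<not> gl G1 (p i)" "n0 \<le> n"
    using assms(4) n0_def by (auto intro: LeastI Least_le dest: not_less_Least)
  have g: "\<And>i. i \<le> n \<Longrightarrow> gl G2 (q i) = gl G1 (p i)" using assms(2) by (simp add: gl_def)
  have c: "csum G2 q n0 = csum G1 p n0"
    unfolding csum_def using assms(1,3) n0(3) by (intro sum.cong) auto
  have A: "costp G1 p = ereal (the (goal G1 (fst (p n0))) (snd (p n0)) + csum G1 p n0)"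
    by (rule costp_first[where G=G1 and p=p and n=n0, OF n0(1,2)])
  have B: "costp G2 q = ereal (the (goal G2 (fst (q n0))) (snd (q n0)) + csum G2 q n0)"
    apply (rule costp_first[where G=G2 and p=q and n=n0])
    using g n0 by auto
  show ?thesis using A B c assms(1,2) n0(3) by simp
qed

definition dflt :: "'l game \<Rightarrow> real \<Rightarrow> 'l strategy" where
  "dflt G e h = (let c = last h in if succ G e c (fst c, e) then (fst c, e) else (SOME q. succ G e c q))"

lemma dflt_succ: "hs G e (last h) \<Longrightarrow> succ G e (last h) (dflt G e h)"
  unfolding dflt_def hs_def Let_def by (auto intro: someI)

lemma dflt_valid: "valid_strat G e P (dflt G e)"
  unfolding valid_strat_def using dflt_succ hs_def by blast

lemma dflt_inc:
  assumes "hs G e (last h)" "snd (last h) < snd (dflt G e h)"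
  shows "snd (dflt G e h) = e"
proof (cases "succ G e (last h) (fst (last h), e)")
  case True then show ?thesis unfolding dflt_def by simp
next
  case False
  have s: "succ G e (last h) (dflt G e h)" using dflt_succ assms(1) .
  then have "\<not> urgent G (fst (last h)) \<and> snd (dflt G e h) \<le> e" using succ_inc assms(2) by blast
  then have "succ G e (last h) (fst (last h), e)" using assms(2) unfolding succ_def by auto
  with False show ?thesis by blast
qed

lemma zeno_loc:
  assumes "valid_strat G e (Lmin G) mu" "valid_strat G e (Lmax G) chi" "fst s \<in> locs G"
    "edges G \<subseteq> locs G \<times> locs G"
    "\<And>i. i \<ge> N \<Longrightarrow> snd (pos G e s mu chi i) < snd (pos G e s mu chi (Suc i))"
    "i \<ge> N"
  shows "fst (pos G e s mu chi i) = fst (pos G e s mu chi N)"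
  using assms(6)
proof (induction i rule: dec_induct)
  case base
  then show ?case by simp
next
  case (step i)
  have hs: "hs G e (pos G e s mu chi i)"
    using play_valid[OF assms(1-4), of i] assms(5)[OF step.hyps(1)] by force
  then have s: "succ G e (pos G e s mu chi i) (pos G e s mu chi (Suc i))"
    using play_valid[OF assms(1-4), of i] by blast
  have "fst (pos G e s mu chi (Suc i)) = fst (pos G e s mu chi i)"
    using succ_inc[OF s assms(5)[OF step.hyps(1)]] by blast
  then show ?case using step.IH by simp
qed

lemma zeno_glue:
  assumes "valid_strat G e (Lmin G) mu" "valid_strat G e (Lmax G) chi" "fst s \<in> locs G"
    "edges G \<subseteq> locs G \<times> locs G"
    "\<And>j. pos G e s mu chi (k+j) = pos G2 e2 s2 mu2 chi2 (m+j)"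
    "zeno_tail G e s mu chi P"
  shows "zeno_tail G2 e2 s2 mu2 chi2 P"
proof -
  obtain N where N: "fst (pos G e s mu chi N) \<in> P" "\<And>i. i \<ge> N \<Longrightarrow> snd (pos G e s mu chi i) < snd (pos G e s mu chi (Suc i))"
    using assms(6) unfolding zeno_tail_def by blast
  define N' where "N' = max N k"
  have "fst (pos G e s mu chi N') = fst (pos G e s mu chi N)"
    by (rule zeno_loc[OF assms(1-4) N(2)]) (auto simp: N'_def)
  then have "fst (pos G e s mu chi N') \<in> P" using N(1) by simp
  moreover have "pos G e s mu chi N' = pos G2 e2 s2 mu2 chi2 (m + (N' - k))"
    using assms(5)[of "N' - k"] N'_def by simp
  ultimately have 1: "fst (pos G2 e2 s2 mu2 chi2 (m + (N' - k))) \<in> P" by simp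
  have 2: "\<forall>i\<ge>m + (N' - k). snd (pos G2 e2 s2 mu2 chi2 i) < snd (pos G2 e2 s2 mu2 chi2 (Suc i))"
  proof (intro allI impI)
    fix i assume i: "i \<ge> m + (N' - k)"
    define d where "d = i - m"
    have id: "i = m + d" using i d_def by simp
    have a: "pos G2 e2 s2 mu2 chi2 i = pos G e s mu chi (k + d)"
      using assms(5)[of d] id by simp
    have b: "pos G2 e2 s2 mu2 chi2 (Suc i) = pos G e s mu chi (Suc (k + d))"
      using assms(5)[of "Suc d"] id by simp
    have "k + d \<ge> N" using i id N'_def by simp
    then show "snd (pos G2 e2 s2 mu2 chi2 i) < snd (pos G2 e2 s2 mu2 chi2 (Suc i))"
      using N(2) a b by simp
  qed
  show ?thesis unfolding zeno_tail_def using 1 2 by blast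
qed


lemma stuck_pos: "\<not> hs G e s \<Longrightarrow> pos G e s mu chi n = s"
proof (induction n)
  case 0 then show ?case by simp
next
  case (Suc n) then show ?case by (simp add: pos_Suc)
qed

lemma stuck_opt:
  assumes "\<not> hs G e s" "goal G (fst s) = None"
  shows "OptCost G b e s = \<infinity>"
proof -
  have c: "cost G e s mu chi = \<infinity>" for mu chi
    unfolding cost_costp using assms by (intro costp_none) (simp add: stuck_pos gl_def)
  have "max_strat G e s (dflt G e)"
    unfolding max_strat_def zeno_tail_def using dflt_valid assms(1)
    by (auto simp: stuck_pos)
  then have SU: "(SUP chi\<in>{chi. max_strat G e s chi}. cost G e s mu chi) = \<infinity>" for mu
    using c by (metis (mono_tags, lifting) SUP_eq_const empty_iff mem_Collect_eq)
  have IN: "(INF mu\<in>Collect (min_strat G e s). (\<infinity>::ereal)) = \<infinity>"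
    by (metis INF_const INF_empty top_ereal_def)
  show ?thesis unfolding OptCost_def using SU IN by simp
qed

definition inlst :: "'l state \<Rightarrow> ('l + 'l) state" where "inlst q = (Inl (fst q), snd q)"
definition unl :: "('l + 'l) state \<Rightarrow> 'l state" where "unl q = (case_sum id id (fst q), snd q)"
definition exitst :: "('l + 'l) state \<Rightarrow> ('l + 'l) state" where "exitst q = (Inr (case_sum id id (fst q)), snd q)"

lemma unl_inlst[simp]: "unl (inlst q) = q" by (simp add: unl_def inlst_def)
lemma map_unl_inlst[simp]: "map unl (map inlst h) = h" by (induction h) auto
lemma snd_inlst[simp]: "snd (inlst q) = snd q" by (simp add: inlst_def)
lemma fst_inlst[simp]: "fst (inlst q) = Inl (fst q)" by (simp add: inlst_def)
lemma snd_unl[simp]: "snd (unl q) = snd q" by (simp add: unl_def)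
lemma inlst_unl: "isl (fst q) \<Longrightarrow> inlst (unl q) = q"
  by (cases q) (auto simp: unl_def inlst_def isl_def)
lemma inlst_inj[simp]: "inlst a = inlst b \<longleftrightarrow> a = b" by (simp add: inlst_def prod_eq_iff)

locale cc =
  fixes G :: "'l game" and b1 r e2 :: real
  assumes sg: "simple_game G" and b1: "0 \<le> b1" "b1 \<le> r" and re: "r \<le> e2" "e2 \<le> 1"
    and fin: "\<And>l. l \<in> locs G \<Longrightarrow> \<bar>OptCost G r e2 (l, r)\<bar> \<noteq> \<infinity>"
begin

definition "G' = cost_consistent G r e2"
definition "V l = real_of_ereal (OptCost G r e2 (l, r))"

lemma V: "l \<in> locs G \<Longrightarrow> OptCost G r e2 (l, r) = ereal (V l)"
  using fin[of l] unfolding V_def by (cases "OptCost G r e2 (l, r)") auto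

lemma edgesG: "edges G \<subseteq> locs G \<times> locs G" using sg by (simp add: simple_game_def)
lemma disjG: "Lmin G \<inter> Lmax G = {}" using sg by (simp add: simple_game_def)

lemma Lmin'[simp]: "Lmin G' = Inl ` Lmin G \<union> Inr ` {l. nonurgent G l}"
  by (simp add: G'_def cost_consistent_def)
lemma Lmax'[simp]: "Lmax G' = Inl ` Lmax G"
  by (simp add: G'_def cost_consistent_def)
lemma goal'_Inl[simp]: "goal G' (Inl l) = goal G l"
  by (simp add: G'_def cost_consistent_def)
lemma goal'_Inr[simp]: "goal G' (Inr l) = (if nonurgent G l then
                     Some (\<lambda>x. real_of_ereal (OptCost G r e2 (l, r)) + (r - x) * real (rate G l)) else None)"
  by (simp add: G'_def cost_consistent_def)
lemma rate'_Inl[simp]: "rate G' (Inl l) = rate G l"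
  by (simp add: G'_def cost_consistent_def)
lemma urgent'_Inl[simp]: "urgent G' (Inl l) = urgent G l"
  by (simp add: G'_def cost_consistent_def)
lemma urgent'_Inr[simp]: "urgent G' (Inr l) = True"
  by (simp add: G'_def cost_consistent_def)
lemma edges': "edges G' = (\<lambda>(a, b). (Inl a, Inl b)) ` edges G \<union> {(Inl l, Inr l) | l. nonurgent G l}"
  by (simp add: G'_def cost_consistent_def)

lemma Inl_Lmin'[simp]: "Inl l \<in> Lmin G' \<longleftrightarrow> l \<in> Lmin G" by auto
lemma Inl_Lmax'[simp]: "Inl l \<in> Lmax G' \<longleftrightarrow> l \<in> Lmax G" by auto
lemma Inl_locs'[simp]: "Inl l \<in> locs G' \<longleftrightarrow> l \<in> locs G" by (auto simp: locs_def)

lemma nonurgent_locs: "nonurgent G l \<Longrightarrow> l \<in> locs G" by (simp add: nonurgent_def)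

lemma edges'_locs: "edges G' \<subseteq> locs G' \<times> locs G'"
  using edgesG by (auto simp: edges' locs_def nonurgent_def)

lemma succ'_Inl_Inl: "succ G' r (Inl l, x) (Inl l', x') \<longleftrightarrow> succ G r (l, x) (l', x')"
  by (auto simp: succ_def edges')

lemma succ'_inlst: "succ G' r (inlst a) (inlst b) \<longleftrightarrow> succ G r a b"
  by (cases a, cases b) (simp add: inlst_def succ'_Inl_Inl)

lemma succ'_Inl_Inr: "succ G' r (Inl l, x) (Inr l', x') \<longleftrightarrow> l' = l \<and> x' = x \<and> nonurgent G l"
  by (auto simp: succ_def edges')

lemma succ'_Inr: "\<not> succ G' r (Inr l, x) q"
  by (auto simp: succ_def edges')

lemma hs'_Inr: "\<not> hs G' r (Inr l, x)"
  by (simp add: hs_def succ'_Inr)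

lemma succ_r_e2: "succ G r a b \<Longrightarrow> succ G e2 a b"
  using re by (auto simp: succ_def)

lemma succ_e2_r: "succ G e2 a b \<Longrightarrow> snd b \<le> r \<Longrightarrow> succ G r a b"
  by (auto simp: succ_def)

lemma succ'_cases:
  assumes "succ G' r (inlst a) q"
  shows "(isl (fst q) \<and> succ G r a (unl q)) \<or> (q = exitst (inlst a) \<and> nonurgent G (fst a))"
proof (cases q)
  case (Pair z x)
  show ?thesis
  proof (cases z)
    case (Inl l') then show ?thesis using assms Pair
      by (cases a) (auto simp: inlst_def unl_def succ'_Inl_Inl)
  next
    case (Inr l') then show ?thesis using assms Pair
      by (cases a) (auto simp: inlst_def exitst_def succ'_Inl_Inr)
  qed
qed

lemma exit_succ: "nonurgent G (fst a) \<Longrightarrow> succ G' r (inlst a) (exitst (inlst a))"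
  by (cases a) (simp add: inlst_def exitst_def succ'_Inl_Inr)

lemma exitst_inlst: "exitst (inlst a) = (Inr (fst a), snd a)"
  by (simp add: exitst_def inlst_def)

lemma hs_equiv_lt:
  assumes "snd a < r" "goal G (fst a) = None" "fst a \<in> locs G"
  shows "hs G' r (inlst a) \<longleftrightarrow> hs G e2 a"
proof
  assume "hs G' r (inlst a)"
  then obtain q where q: "succ G' r (inlst a) q" unfolding hs_def by blast
  from succ'_cases[OF this] show "hs G e2 a"
  proof
    assume "isl (fst q) \<and> succ G r a (unl q)" then show ?thesis using succ_r_e2 unfolding hs_def by blast
  next
    assume "q = exitst (inlst a) \<and> nonurgent G (fst a)"
    then have "succ G e2 a (fst a, r)" using assms re unfolding succ_def nonurgent_def by auto
    then show ?thesis unfolding hs_def by blast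
  qed
next
  assume "hs G e2 a"
  then obtain q where q: "succ G e2 a q" unfolding hs_def by blast
  show "hs G' r (inlst a)"
  proof (cases "(fst a, fst q) \<in> edges G \<and> snd q = snd a")
    case True
    then have "succ G r a q" unfolding succ_def by auto
    then show ?thesis using succ'_inlst unfolding hs_def by blast
  next
    case False
    then have "\<not> urgent G (fst a)" using q unfolding succ_def by auto
    then have "succ G r a (fst a, r)" using assms unfolding succ_def by auto
    then show ?thesis using succ'_inlst unfolding hs_def by blast
  qed
qed

end

lemma hist_own:
  assumes "hist G e s mu chi k = P" "strict_prefix h P" "h \<noteq> []"
  shows "\<exists>j<k. hist G e s mu chi j = h \<and> hs G e (pos G e s mu chi j) \<and>
     hist G e s mu chi (Suc j) = h @ [P ! length h] \<and> P ! length h = owner G mu chi (last h) h"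
proof -
  obtain j where j: "j \<le> k" "hist G e s mu chi j = h"
    using prefix_hist[of h G e s mu chi k] assms strict_prefix_def by metis
  have jk: "j \<noteq> k" using j assms by auto
  have hs: "hs G e (pos G e s mu chi j)"
  proof (rule ccontr)
    assume "\<not> ?thesis"
    then have "hist G e s mu chi (j + (k - j)) = hist G e s mu chi j" by (rule stuck_const)
    then show False using j assms by simp
  qed
  have lp: "last h = pos G e s mu chi j" using j(2) by (metis last_hist)
  have S: "hist G e s mu chi (Suc j) = h @ [owner G mu chi (last h) h]"
    using hist_Suc'[of G e s mu chi j] hs j lp by simp
  have "prefix (hist G e s mu chi (Suc j)) P" using assms(1) hist_prefix j jk
    by (metis Suc_leI le_neq_implies_less)
  then obtain t where "P = (h @ [owner G mu chi (last h) h]) @ t" using S by (auto simp: prefix_def)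
  then have "P ! length h = owner G mu chi (last h) h" by (simp add: nth_append)
  then show ?thesis using j jk hs S by (intro exI[of _ j]) auto
qed

lemma force_hist:
  assumes "hist G e s mu chi k = P"
    "\<And>h. strict_prefix h P \<Longrightarrow> h \<noteq> [] \<Longrightarrow> owner G mu' chi' (last h) h = P ! length h"
  shows "hist G e s mu' chi' k = P"
proof -
  have "hist G e s mu' chi' k = hist G e s mu chi k"
  proof (rule hist_agree)
    fix i assume i: "i < k" "hs G e (pos G e s mu chi i)"
    have "prefix (hist G e s mu chi (Suc i)) P" using assms(1) hist_prefix i by (metis Suc_leI)
    moreover have "hist G e s mu chi (Suc i) = hist G e s mu chi i @ [pos G e s mu chi (Suc i)]"
      using hist_Suc_hs[OF i(2)] .
    ultimately obtain t where "P = hist G e s mu chi i @ ([pos G e s mu chi (Suc i)] @ t)"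
      by (auto simp: prefix_def)
    then have sp: "strict_prefix (hist G e s mu chi i) P"
      by (simp add: strict_prefix_def)
    obtain j where j: "j<k" "hist G e s mu chi j = hist G e s mu chi i"
        "P ! length (hist G e s mu chi i) = owner G mu chi (last (hist G e s mu chi i)) (hist G e s mu chi i)"
      using hist_own[OF assms(1) sp] by auto
    show "owner G mu' chi' (pos G e s mu chi i) (hist G e s mu chi i) = owner G mu chi (pos G e s mu chi i) (hist G e s mu chi i)"
      using assms(2)[OF sp] j(3) by (simp add: last_hist)
  qed
  then show ?thesis using assms(1) by simp
qed

lemma force_succ:
  assumes "valid_strat G e (Lmin G) mu" "valid_strat G e (Lmax G) chi" "fst s \<in> locs G"
    "edges G \<subseteq> locs G \<times> locs G"
    "hist G e s mu chi k = P" "strict_prefix h P" "h \<noteq> []"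
  shows "succ G e (last h) (P ! length h)"
proof -
  obtain j where j: "hist G e s mu chi j = h" "hs G e (pos G e s mu chi j)"
     "hist G e s mu chi (Suc j) = h @ [P ! length h]"
    using hist_own[OF assms(5-7)] by blast
  have "succ G e (pos G e s mu chi j) (pos G e s mu chi (Suc j))"
    using play_valid[OF assms(1-4), of j] j(2) by blast
  moreover have "pos G e s mu chi (Suc j) = P ! length h" using j(3) by (simp add: pos_def)
  ultimately show ?thesis using j(1) by (simp add: last_hist[symmetric])
qed

definition force :: "'l game \<Rightarrow> real \<Rightarrow> 'l state list \<Rightarrow> 'l strategy" where
  "force G e Q h = (if strict_prefix h Q then Q ! length h else dflt G e h)"

definition compo :: "'l state list \<Rightarrow> 'l state list \<Rightarrow> 'l strategy \<Rightarrow> 'l strategy \<Rightarrow> 'l strategy" where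
  "compo Q R s1 s2 h = (if prefix Q h then s2 (R @ drop (length Q) h) else s1 h)"

abbreviation "resid G e H0 P sg \<equiv> compo H0 P (force G e H0) sg"

lemma compo_app[simp]: "compo Q R s1 s2 (Q @ t) = s2 (R @ t)"
  by (simp add: compo_def)

lemma force_valid:
  assumes "\<And>h. strict_prefix h Q \<Longrightarrow> h \<noteq> [] \<Longrightarrow> succ G e (last h) (Q ! length h)"
  shows "valid_strat G e A (force G e Q)"
  unfolding valid_strat_def force_def using assms dflt_succ unfolding hs_def by fastforce

lemma compo_valid:
  assumes "valid_strat G e A s1" "valid_strat G e A s2" "last R = last Q" "R \<noteq> []"
  shows "valid_strat G e A (compo Q R s1 s2)"
  unfolding valid_strat_def
proof (intro allI impI)
  fix h assume h: "h \<noteq> [] \<and> fst (last h) \<in> A \<and> (\<exists>s'. succ G e (last h) s')"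
  show "succ G e (last h) (compo Q R s1 s2 h)"
  proof (cases "prefix Q h")
    case True
    then obtain t where t: "h = Q @ t" by (auto simp: prefix_def)
    have L: "last (R @ t) = last h" using t assms(3,4) h by (cases "t = []") auto
    have "R @ t \<noteq> []" using assms(4) by simp
    then have "succ G e (last (R @ t)) (s2 (R @ t))"
      using assms(2) h L unfolding valid_strat_def by metis
    then show ?thesis using L t by simp
  next
    case False
    then show ?thesis using assms(1) h unfolding valid_strat_def compo_def by simp
  qed
qed

lemma H0_force_succ:
  assumes "H0 = [s2] \<or> (H0 = [s2, q] \<and> succ G e s2 q)"
  shows "strict_prefix h H0 \<Longrightarrow> h \<noteq> [] \<Longrightarrow> succ G e (last h) (H0 ! length h)"
  using assms by (auto simp: strict_prefix_def prefix_Cons)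

lemma H0_reach_min:
  assumes "H0 = [s2] \<or> (H0 = [s2, q] \<and> fst s2 \<in> Lmin G \<and> succ G e s2 q \<and> mu [s2] = q)"
  shows "hist G e s2 mu chi (length H0 - 1) = H0"
  using assms
proof
  assume "H0 = [s2, q] \<and> fst s2 \<in> Lmin G \<and> succ G e s2 q \<and> mu [s2] = q"
  then show ?thesis by (simp add: hist_Suc' hs_def) (metis prod.collapse)
qed simp

lemma H0_reach_max:
  assumes "H0 = [s2] \<or> (H0 = [s2, q] \<and> fst s2 \<notin> Lmin G \<and> succ G e s2 q \<and> chi [s2] = q)"
  shows "hist G e s2 mu chi (length H0 - 1) = H0"
  using assms
proof
  assume "H0 = [s2, q] \<and> fst s2 \<notin> Lmin G \<and> succ G e s2 q \<and> chi [s2] = q"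
  then show ?thesis by (simp add: hist_Suc' hs_def) (metis prod.collapse)
qed simp


lemma resid_min:
  assumes mu: "min_strat G e s mu" and chi: "valid_strat G e (Lmax G) chi" and s: "fst s \<in> locs G"
   and E: "edges G \<subseteq> locs G \<times> locs G"
   and P: "hist G e s mu chi k = P"
   and H0: "H0 = [s2] \<or> (H0 = [s2, q] \<and> fst s2 \<in> Lmin G \<and> succ G e s2 q)"
   and L: "last H0 = last P" and s2: "fst s2 \<in> locs G"
  shows "min_strat G e s2 (resid G e H0 P mu)"
proof -
  let ?m2 = "resid G e H0 P mu"
  have muv: "valid_strat G e (Lmin G) mu" using mu by (simp add: min_strat_def)
  have H0ne: "H0 \<noteq> []" and hd: "hd H0 = s2" using H0 by auto
  have Pne: "P \<noteq> []" using P by auto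
  have fs: "\<And>h. strict_prefix h H0 \<Longrightarrow> h \<noteq> [] \<Longrightarrow> succ G e (last h) (H0 ! length h)"
    by (rule H0_force_succ[of H0 s2 q]) (use H0 in auto)
  have v2: "valid_strat G e (Lmin G) ?m2"
    by (rule compo_valid[OF force_valid[OF fs] muv]) (use L Pne in auto)
  moreover have "\<not> zeno_tail G e s2 ?m2 chi2 (Lmin G)" if c2: "valid_strat G e (Lmax G) chi2" for chi2
  proof
    assume Z: "zeno_tail G e s2 ?m2 chi2 (Lmin G)"
    let ?c = "compo P H0 (force G e P) chi2"
    have vc: "valid_strat G e (Lmax G) ?c"
      by (rule compo_valid[OF force_valid[OF force_succ[OF muv chi s E P]] c2]) (use L H0ne in auto)
    have hk: "hist G e s mu ?c k = P"
    proof (rule force_hist[OF P])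
      fix h assume h: "strict_prefix h P" "h \<noteq> []"
      have np: "\<not> prefix P h" using h(1)
        by (meson prefix_order.dual_order.strict_trans1 prefix_order.less_irrefl)
      show "owner G mu ?c (last h) h = P ! length h"
        using hist_own[OF P h] np h(1) by (auto simp: compo_def force_def)
    qed
    have h2: "hist G e (hd H0) ?m2 chi2 (length H0 - 1) = H0"
      unfolding hd
    proof (rule H0_reach_min[of H0 s2 q])
      show "H0 = [s2] \<or> H0 = [s2, q] \<and> fst s2 \<in> Lmin G \<and> succ G e s2 q \<and> ?m2 [s2] = q"
        using H0 by (auto simp: compo_def force_def strict_prefix_def)
    qed
    have g: "pos G e s mu ?c (k+j) = pos G e (hd H0) ?m2 chi2 ((length H0 - 1) + j)" for j
      by (rule pos_glue[OF hk H0ne L h2]) simp_all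
    have "zeno_tail G e s mu ?c (Lmin G)"
      apply (rule zeno_glue[of G e "?m2" chi2 s2 "length H0 - 1" G e s mu "?c" k])
      using v2 c2 s2 E Z g hd by (auto simp: min_strat_def)
    then show False using mu vc by (simp add: min_strat_def)
  qed
  ultimately show ?thesis by (simp add: min_strat_def)
qed

lemma resid_max:
  assumes chi: "max_strat G e s chi" and mu: "valid_strat G e (Lmin G) mu" and s: "fst s \<in> locs G"
   and E: "edges G \<subseteq> locs G \<times> locs G" and D: "Lmin G \<inter> Lmax G = {}"
   and P: "hist G e s mu chi k = P"
   and H0: "H0 = [s2] \<or> (H0 = [s2, q] \<and> fst s2 \<in> Lmax G \<and> succ G e s2 q)"
   and L: "last H0 = last P" and s2: "fst s2 \<in> locs G"
  shows "max_strat G e s2 (resid G e H0 P chi)"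
proof -
  let ?c2 = "resid G e H0 P chi"
  have chiv: "valid_strat G e (Lmax G) chi" using chi by (simp add: max_strat_def)
  have H0ne: "H0 \<noteq> []" and hd: "hd H0 = s2" using H0 by auto
  have Pne: "P \<noteq> []" using P by auto
  have fs: "\<And>h. strict_prefix h H0 \<Longrightarrow> h \<noteq> [] \<Longrightarrow> succ G e (last h) (H0 ! length h)"
    by (rule H0_force_succ[of H0 s2 q]) (use H0 in auto)
  have v2: "valid_strat G e (Lmax G) ?c2"
    by (rule compo_valid[OF force_valid[OF fs] chiv]) (use L Pne in auto)
  moreover have "\<not> zeno_tail G e s2 mu2 ?c2 (Lmax G)" if m2: "valid_strat G e (Lmin G) mu2" for mu2
  proof
    assume Z: "zeno_tail G e s2 mu2 ?c2 (Lmax G)"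
    let ?m = "compo P H0 (force G e P) mu2"
    have vm: "valid_strat G e (Lmin G) ?m"
      by (rule compo_valid[OF force_valid[OF force_succ[OF mu chiv s E P]] m2]) (use L H0ne in auto)
    have hk: "hist G e s ?m chi k = P"
    proof (rule force_hist[OF P])
      fix h assume h: "strict_prefix h P" "h \<noteq> []"
      have np: "\<not> prefix P h" using h(1)
        by (meson prefix_order.dual_order.strict_trans1 prefix_order.less_irrefl)
      show "owner G ?m chi (last h) h = P ! length h"
        using hist_own[OF P h] np h(1) by (auto simp: compo_def force_def)
    qed
    have h2: "hist G e (hd H0) mu2 ?c2 (length H0 - 1) = H0"
      unfolding hd
    proof (rule H0_reach_max[of H0 s2 q])
      show "H0 = [s2] \<or> H0 = [s2, q] \<and> fst s2 \<notin> Lmin G \<and> succ G e s2 q \<and> ?c2 [s2] = q"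
        using H0 D by (auto simp: compo_def force_def strict_prefix_def)
    qed
    have g: "pos G e s ?m chi (k+j) = pos G e (hd H0) mu2 ?c2 ((length H0 - 1) + j)" for j
      by (rule pos_glue[OF hk H0ne L h2]) simp_all
    have "zeno_tail G e s ?m chi (Lmax G)"
      apply (rule zeno_glue[of G e mu2 "?c2" s2 "length H0 - 1" G e s "?m" chi k])
      using v2 m2 s2 E Z g hd by (auto simp: max_strat_def)
    then show False using chi vm by (simp add: max_strat_def)
  qed
  ultimately show ?thesis by (simp add: max_strat_def)
qed

lemma compo_max:
  assumes c1: "max_strat G e s chi1" and c2: "max_strat G e s2 chi2" and s: "fst s \<in> locs G"
   and E: "edges G \<subseteq> locs G \<times> locs G"
   and Pne: "P \<noteq> []" and L: "last H0 = last P"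
   and H0: "H0 = [s2] \<or> (H0 = [s2, q] \<and> fst s2 \<in> Lmin G \<and> succ G e s2 q)"
   and s2: "fst s2 \<in> locs G"
  shows "max_strat G e s (compo P H0 chi1 chi2)"
proof -
  let ?c = "compo P H0 chi1 chi2"
  have H0ne: "H0 \<noteq> []" and hd: "hd H0 = s2" using H0 by auto
  have v: "valid_strat G e (Lmax G) ?c"
    by (rule compo_valid) (use c1 c2 L H0ne in \<open>auto simp: max_strat_def\<close>)
  moreover have "\<not> zeno_tail G e s mu ?c (Lmax G)" if m: "valid_strat G e (Lmin G) mu" for mu
  proof
    assume Z: "zeno_tail G e s mu ?c (Lmax G)"
    show False
    proof (cases "\<exists>k. hist G e s mu ?c k = P")
      case True
      then obtain k where P: "hist G e s mu ?c k = P" by blast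
      let ?m2 = "resid G e H0 P mu"
      have fs: "\<And>h. strict_prefix h H0 \<Longrightarrow> h \<noteq> [] \<Longrightarrow> succ G e (last h) (H0 ! length h)"
        by (rule H0_force_succ[of H0 s2 q]) (use H0 in auto)
      have v2: "valid_strat G e (Lmin G) ?m2"
        by (rule compo_valid[OF force_valid[OF fs] m]) (use L Pne in auto)
      have h2: "hist G e (hd H0) ?m2 chi2 (length H0 - 1) = H0"
        unfolding hd
      proof (rule H0_reach_min[of H0 s2 q])
        show "H0 = [s2] \<or> H0 = [s2, q] \<and> fst s2 \<in> Lmin G \<and> succ G e s2 q \<and> ?m2 [s2] = q"
          using H0 by (auto simp: compo_def force_def strict_prefix_def)
      qed
      have g: "pos G e s mu ?c (k+j) = pos G e (hd H0) ?m2 chi2 ((length H0 - 1) + j)" for j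
        by (rule pos_glue[OF P H0ne L h2]) simp_all
      have "zeno_tail G e s2 ?m2 chi2 (Lmax G)"
        apply (rule zeno_glue[of G e mu "?c" s k G e s2 "?m2" chi2 "length H0 - 1"])
        using v m s E Z g hd by auto
      then show False using c2 v2 by (simp add: max_strat_def)
    next
      case False
      have np: "\<not> prefix P (hist G e s mu ?c i)" for i
        using prefix_hist[of P G e s mu ?c i] Pne False by blast
      have "hist G e s mu chi1 n = hist G e s mu ?c n" for n
        by (rule hist_agree) (use np in \<open>auto simp: compo_def last_hist\<close>)
      then have "pos G e s mu chi1 n = pos G e s mu ?c n" for n by (simp add: pos_def)
      then have "zeno_tail G e s mu chi1 (Lmax G)" using Z by (simp add: zeno_tail_def)
      then show False using c1 m by (simp add: max_strat_def)
    qed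
  qed
  ultimately show ?thesis by (simp add: max_strat_def)
qed


lemma clock_bound:
  assumes "valid_strat G e (Lmin G) mu" "valid_strat G e (Lmax G) chi" "fst s \<in> locs G"
    "edges G \<subseteq> locs G \<times> locs G" "snd s \<le> e"
  shows "snd (pos G e s mu chi n) \<le> e"
proof (induction n)
  case 0 then show ?case using assms(5) by simp
next
  case (Suc n)
  show ?case
  proof (cases "hs G e (pos G e s mu chi n)")
    case True
    then have "succ G e (pos G e s mu chi n) (pos G e s mu chi (Suc n))"
      using play_valid[OF assms(1-4)] by blast
    then show ?thesis using Suc unfolding succ_def by auto
  next
    case False
    then show ?thesis using Suc play_valid[OF assms(1-4), of n] by auto
  qed
qed

lemma clock_mono1:
  assumes "valid_strat G e (Lmin G) mu" "valid_strat G e (Lmax G) chi" "fst s \<in> locs G"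
    "edges G \<subseteq> locs G \<times> locs G"
  shows "snd (pos G e s mu chi n) \<le> snd (pos G e s mu chi (Suc n))"
proof (cases "hs G e (pos G e s mu chi n)")
  case True
  then show ?thesis using play_valid[OF assms, of n] succ_mono by blast
next
  case False
  then show ?thesis using play_valid[OF assms, of n] by simp
qed

lemma clock_mono:
  assumes "valid_strat G e (Lmin G) mu" "valid_strat G e (Lmax G) chi" "fst s \<in> locs G"
    "edges G \<subseteq> locs G \<times> locs G" "i \<le> j"
  shows "snd (pos G e s mu chi i) \<le> snd (pos G e s mu chi j)"
  using assms(5)
proof (induction j rule: dec_induct)
  case base then show ?case by simp
next
  case (step j) then show ?case using clock_mono1[OF assms(1-4), of j] by linarith
qed

lemma stuck_from:
  assumes "\<not> hs G e (pos G e s mu chi i)"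
  shows "pos G e s mu chi (i + j) = pos G e s mu chi i"
  using stuck_const[OF assms] by (simp add: pos_def)

lemma hist_length_hs:
  assumes "\<And>i. i < n \<Longrightarrow> hs G e (pos G e s mu chi i)"
  shows "length (hist G e s mu chi n) = Suc n"
  using assms
proof (induction n)
  case 0 then show ?case by simp
next
  case (Suc n)
  have "hs G e (pos G e s mu chi n)" using Suc.prems by simp
  then have "hist G e s mu chi (Suc n) = hist G e s mu chi n @ [pos G e s mu chi (Suc n)]"
    by (rule hist_Suc_hs)
  then show ?case using Suc by simp
qed

lemma hist_length_le: "i \<le> n \<Longrightarrow> length (hist G e s mu chi i) \<le> Suc n"
  using hist_length[of G e s mu chi i] by linarith

lemma inc_succ:
  assumes "valid_strat G e (Lmin G) mu" "valid_strat G e (Lmax G) chi" "fst s \<in> locs G"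
    "edges G \<subseteq> locs G \<times> locs G"
    "snd (pos G e s mu chi i) < snd (pos G e s mu chi (Suc i))"
  shows "hs G e (pos G e s mu chi i) \<and> succ G e (pos G e s mu chi i) (pos G e s mu chi (Suc i))"
proof -
  have "hs G e (pos G e s mu chi i)"
  proof (rule ccontr)
    assume "\<not> ?thesis"
    then have "pos G e s mu chi (Suc i) = pos G e s mu chi i" by (simp add: pos_Suc)
    then show False using assms(5) by simp
  qed
  then show ?thesis using play_valid[OF assms(1-4), of i] by blast
qed

context cc begin

definition trG :: "('l + 'l) strategy \<Rightarrow> 'l strategy" where
  "trG sg h = (let c = last h; q' = sg (map inlst h) in
     if isl (fst q') \<and> succ G' r (inlst c) q' then unl q'
     else if \<not> isl (fst q') \<and> snd c < r \<and> succ G e2 c (fst c, r) then (fst c, r)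
     else dflt G e2 h)"

definition trG' :: "'l strategy \<Rightarrow> ('l + 'l) strategy" where
  "trG' sg h' = (let c = last h'; q = sg (map unl h') in
     if succ G' r c (inlst q) then inlst q
     else if r < snd q \<and> succ G' r c (exitst c) then exitst c
     else dflt G' r h')"

lemma succ'_Inl_src:
  assumes "succ G' r (inlst a) q" "isl (fst q)" shows "succ G r a (unl q)"
  using succ'_cases[OF assms(1)] assms(2) by (auto simp: exitst_def)

lemma trG_valid: "valid_strat G e2 A (trG sg)"
  unfolding valid_strat_def
proof (intro allI impI)
  fix h :: "'l state list" assume h: "h \<noteq> [] \<and> fst (last h) \<in> A \<and> (\<exists>s'. succ G e2 (last h) s')"
  then have hs: "hs G e2 (last h)" by (simp add: hs_def)
  show "succ G e2 (last h) (trG sg h)"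
    unfolding trG_def Let_def using succ'_Inl_src succ_r_e2 dflt_succ[OF hs] by auto
qed

lemma trG'_valid: "valid_strat G' r A (trG' sg)"
  unfolding valid_strat_def
proof (intro allI impI)
  fix h :: "('l + 'l) state list" assume h: "h \<noteq> [] \<and> fst (last h) \<in> A \<and> (\<exists>s'. succ G' r (last h) s')"
  then have hs: "hs G' r (last h)" by (simp add: hs_def)
  show "succ G' r (last h) (trG' sg h)"
    unfolding trG'_def Let_def using dflt_succ[OF hs] by auto
qed

lemma G'_loc: "fst s \<in> locs G \<Longrightarrow> fst (inlst s) \<in> locs G'" by simp

lemma hs_equiv_lt':
  assumes "snd a < r" "fst a \<in> locs G"
  shows "hs G' r (inlst a) \<longleftrightarrow> hs G e2 a"
proof
  assume "hs G' r (inlst a)"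
  then obtain q where q: "succ G' r (inlst a) q" unfolding hs_def by blast
  from succ'_cases[OF this] show "hs G e2 a"
  proof
    assume "isl (fst q) \<and> succ G r a (unl q)" then show ?thesis using succ_r_e2 unfolding hs_def by blast
  next
    assume "q = exitst (inlst a) \<and> nonurgent G (fst a)"
    then have "succ G e2 a (fst a, r)" using assms re unfolding succ_def nonurgent_def by auto
    then show ?thesis unfolding hs_def by blast
  qed
next
  assume "hs G e2 a"
  then obtain q where q: "succ G e2 a q" unfolding hs_def by blast
  show "hs G' r (inlst a)"
  proof (cases "(fst a, fst q) \<in> edges G \<and> snd q = snd a")
    case True
    then have "succ G r a q" unfolding succ_def by auto
    then show ?thesis using succ'_inlst unfolding hs_def by blast
  next
    case False
    then have "\<not> urgent G (fst a)" using q unfolding succ_def by auto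
    then have "succ G r a (fst a, r)" using assms unfolding succ_def by auto
    then show ?thesis using succ'_inlst unfolding hs_def by blast
  qed
qed

lemma unl_o_inlst[simp]: "unl \<circ> inlst = id" by (auto simp: fun_eq_iff)

lemma last_map_inlst: "h \<noteq> [] \<Longrightarrow> last (map inlst h) = inlst (last h)"
  by (simp add: last_map)

lemma stepA_le:
  assumes "h \<noteq> []" "snd (sg h) \<le> r" "succ G e2 (last h) (sg h)"
  shows "trG' sg (map inlst h) = inlst (sg h)"
proof -
  have "succ G r (last h) (sg h)" using succ_e2_r assms by blast
  then show ?thesis using assms(1) unfolding trG'_def Let_def by (simp add: last_map_inlst succ'_inlst)
qed

lemma stepA_gt:
  assumes "h \<noteq> []" "r < snd (sg h)" "snd (last h) \<le> r" "succ G e2 (last h) (sg h)"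
    "goal G (fst (last h)) = None" "fst (last h) \<in> locs G"
  shows "trG' sg (map inlst h) = exitst (inlst (last h))"
proof -
  have n1: "\<not> succ G' r (inlst (last h)) (inlst (sg h))"
    using assms(2,3) by (auto simp: succ'_inlst succ_def)
  have "\<not> urgent G (fst (last h))" using assms(2,3,4) succ_inc by fastforce
  then have "nonurgent G (fst (last h))" using assms(5,6) by (simp add: nonurgent_def)
  then have "succ G' r (inlst (last h)) (exitst (inlst (last h)))" by (rule exit_succ)
  then show ?thesis using assms(1,2) n1 unfolding trG'_def Let_def by (simp add: last_map_inlst)
qed

lemma stepA_gt':
  assumes "h \<noteq> []" "r < snd (sg h)" "snd (last h) < r" "succ G e2 (last h) (sg h)"
  shows "\<not> isl (fst (trG' sg (map inlst h))) \<or> snd (trG' sg (map inlst h)) = r"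
proof -
  have n1: "\<not> succ G' r (inlst (last h)) (inlst (sg h))"
    using assms(2,3) by (auto simp: succ'_inlst succ_def)
  have "\<not> urgent G (fst (last h))" using assms(2,3,4) succ_inc by fastforce
  then have d: "succ G' r (inlst (last h)) (Inl (fst (last h)), r)"
    using assms(3) by (simp add: inlst_def succ_def)
  then have "dflt G' r (map inlst h) = (Inl (fst (last h)), r)"
    using assms(1) by (simp add: dflt_def last_map_inlst inlst_def)
  then show ?thesis using assms(1) n1 unfolding trG'_def Let_def
    by (auto simp: last_map_inlst exitst_def)
qed

lemma stepB_inl:
  assumes "h \<noteq> []" "succ G' r (inlst (last h)) (sg (map inlst h))" "isl (fst (sg (map inlst h)))"
  shows "trG sg h = unl (sg (map inlst h))"
  using assms unfolding trG_def Let_def by simp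

lemma stepB_exit:
  assumes "h \<noteq> []" "succ G' r (inlst (last h)) (sg (map inlst h))" "\<not> isl (fst (sg (map inlst h)))"
    "snd (last h) < r"
  shows "trG sg h = (fst (last h), r)"
proof -
  have "sg (map inlst h) = exitst (inlst (last h)) \<and> nonurgent G (fst (last h))"
    using succ'_cases[OF assms(2)] assms(3) by blast
  then have "succ G e2 (last h) (fst (last h), r)"
    using assms(4) re by (auto simp: nonurgent_def succ_def)
  then show ?thesis using assms unfolding trG_def Let_def by simp
qed

lemma G'_valid_start: "fst s \<in> locs G \<Longrightarrow> fst (inlst s) \<in> locs G'" by simp

end

context cc begin

declare Lmin'[simp del] Lmax'[simp del]

lemma Inr_Lmin'[simp]: "Inr l \<in> Lmin G' \<longleftrightarrow> nonurgent G l" by (auto simp: Lmin')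
lemma Inr_Lmax'[simp]: "Inr l \<notin> Lmax G'" by (auto simp: Lmax')

lemma pos_inlst_hist:
  "hist G' r s' m' c' n = map inlst (hist G e2 s m c n) \<Longrightarrow> pos G' r s' m' c' n = inlst (pos G e2 s m c n)"
  by (simp add: pos_def last_map)

lemma Inr_stuck_contra:
  assumes "\<not> isl (fst (pos G' r s' m' c' i))"
    and N: "\<And>i. i \<ge> N \<Longrightarrow> snd (pos G' r s' m' c' i) < snd (pos G' r s' m' c' (Suc i))"
  shows False
proof -
  obtain l x where e: "pos G' r s' m' c' i = (Inr l, x)"
    using assms(1) by (metis isl_def old.sum.exhaust prod.collapse)
  then have "\<not> hs G' r (pos G' r s' m' c' i)" using hs'_Inr by simp
  then have a: "pos G' r s' m' c' (i + (max i N - i)) = pos G' r s' m' c' i"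
    and b: "pos G' r s' m' c' (i + (Suc (max i N) - i)) = pos G' r s' m' c' i"
    by (rule stuck_from)+
  have "pos G' r s' m' c' (max i N) = pos G' r s' m' c' (Suc (max i N))"
    using a b by (simp add: Suc_diff_le)
  with N[of "max i N"] show False by simp
qed

lemma Z1_min:
  assumes mu: "min_strat G e2 s mu" and s: "fst s \<in> locs G" "snd s \<le> r"
   and chi': "valid_strat G' r (Lmax G') chi'"
  shows "\<not> zeno_tail G' r (inlst s) (trG' mu) chi' (Lmin G')"
proof
  assume Z: "zeno_tail G' r (inlst s) (trG' mu) chi' (Lmin G')"
  let ?p' = "pos G' r (inlst s) (trG' mu) chi'"
  have v1: "valid_strat G' r (Lmin G') (trG' mu)" by (rule trG'_valid)
  have s': "fst (inlst s) \<in> locs G'" using s by simp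
  note E' = edges'_locs
  obtain N where N: "fst (?p' N) \<in> Lmin G'" "\<And>i. i \<ge> N \<Longrightarrow> snd (?p' i) < snd (?p' (Suc i))"
    using Z by (auto simp: zeno_tail_def)
  have isl: "isl (fst (?p' i))" for i
    using Inr_stuck_contra[OF _ N(2)] by blast
  have le: "snd (?p' i) \<le> r" for i by (rule clock_bound[OF v1 chi' s' E']) (use s in simp)
  have lt: "snd (?p' i) < r" for i
  proof (cases "i \<ge> N")
    case True then show ?thesis using N(2)[OF True] le[of "Suc i"] by simp
  next
    case False
    then have "snd (?p' i) \<le> snd (?p' N)" using clock_mono[OF v1 chi' s' E'] by simp
    then show ?thesis using N(2)[of N] le[of "Suc N"] by simp
  qed
  let ?tau = "trG chi'"
  let ?p = "pos G e2 s mu ?tau"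
  have muv: "valid_strat G e2 (Lmin G) mu" using mu by (simp add: min_strat_def)
  have tv: "valid_strat G e2 (Lmax G) ?tau" by (rule trG_valid)
  have H: "hist G' r (inlst s) (trG' mu) chi' n = map inlst (hist G e2 s mu ?tau n)" for n
  proof (rule hist_sim[where f=inlst], simp)
    fix i assume i: "i < n" and Hi: "hist G' r (inlst s) (trG' mu) chi' i = map inlst (hist G e2 s mu ?tau i)"
    let ?h = "hist G e2 s mu ?tau i" let ?c = "?p i"
    have pc: "?p' i = inlst ?c" using Hi by (rule pos_inlst_hist)
    have cl: "snd ?c < r" using lt[of i] pc by simp
    have cloc: "fst ?c \<in> locs G" using play_valid[OF muv tv s(1) edgesG] by blast
    have hseq: "hs G' r (inlst ?c) \<longleftrightarrow> hs G e2 ?c" by (rule hs_equiv_lt'[OF cl cloc])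
    moreover have "hs G e2 ?c \<longrightarrow> owner G' (trG' mu) chi' (inlst ?c) (map inlst ?h) = inlst (owner G mu ?tau ?c ?h)"
    proof
      assume hc: "hs G e2 ?c"
      have hne: "?h \<noteq> []" by simp
      have lh: "last ?h = ?c" by (simp add: last_hist)
      have succ': "succ G' r (?p' i) (?p' (Suc i))"
        using play_valid[OF v1 chi' s' E', of i] hseq hc pc by auto
      have nxt: "?p' (Suc i) = owner G' (trG' mu) chi' (inlst ?c) (map inlst ?h)"
        using pos_Suc[of G' r "inlst s" "trG' mu" chi' i] hseq hc pc Hi by simp
      show "owner G' (trG' mu) chi' (inlst ?c) (map inlst ?h) = inlst (owner G mu ?tau ?c ?h)"
      proof (cases "fst ?c \<in> Lmin G")
        case True
        have q: "succ G e2 (last ?h) (mu ?h)" using owner_step[OF muv tv cloc hc hne lh] True lh by simp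
        show ?thesis
        proof (cases "snd (mu ?h) \<le> r")
          case T2: True
          show ?thesis using stepA_le[where sg=mu, OF hne T2 q] True by simp
        next
          case False
          then have "\<not> isl (fst (trG' mu (map inlst ?h))) \<or> snd (trG' mu (map inlst ?h)) = r"
            using stepA_gt'[where sg=mu, OF hne _ _ q] cl lh by simp
          then have "\<not> isl (fst (?p' (Suc i))) \<or> snd (?p' (Suc i)) = r" using nxt True by simp
          then show ?thesis using isl[of "Suc i"] lt[of "Suc i"] by auto
        qed
      next
        case False
        let ?q' = "chi' (map inlst ?h)"
        have q'eq: "?p' (Suc i) = ?q'" using nxt False by simp
        have sq: "succ G' r (inlst (last ?h)) ?q'" using succ' pc q'eq lh by simp
        have il: "isl (fst ?q')" using isl[of "Suc i"] q'eq by simp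
        have "?tau ?h = unl ?q'" by (rule stepB_inl[where sg=chi', OF hne sq il])
        then show ?thesis using False inlst_unl[OF il] by simp
      qed
    qed
    ultimately show "(hs G' r (inlst ?c) \<longleftrightarrow> hs G e2 ?c) \<and>
        (hs G e2 ?c \<longrightarrow> owner G' (trG' mu) chi' (inlst ?c) (map inlst ?h) = inlst (owner G mu ?tau ?c ?h))"
      by blast
  qed
  have pp: "?p' n = inlst (?p n)" for n using H[of n] by (rule pos_inlst_hist)
  have "zeno_tail G e2 s mu ?tau (Lmin G)"
    unfolding zeno_tail_def using N pp by (intro exI[of _ N]) auto
  then show False using mu tv by (simp add: min_strat_def)
qed


lemma Z1_max:
  assumes chi: "max_strat G e2 s chi" and s: "fst s \<in> locs G" "snd s \<le> r"
   and mu': "valid_strat G' r (Lmin G') mu'"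
  shows "\<not> zeno_tail G' r (inlst s) mu' (trG' chi) (Lmax G')"
proof
  assume Z: "zeno_tail G' r (inlst s) mu' (trG' chi) (Lmax G')"
  let ?p' = "pos G' r (inlst s) mu' (trG' chi)"
  have v1: "valid_strat G' r (Lmax G') (trG' chi)" by (rule trG'_valid)
  have s': "fst (inlst s) \<in> locs G'" using s by simp
  note E' = edges'_locs
  obtain N where N: "fst (?p' N) \<in> Lmax G'" "\<And>i. i \<ge> N \<Longrightarrow> snd (?p' i) < snd (?p' (Suc i))"
    using Z by (auto simp: zeno_tail_def)
  have isl: "isl (fst (?p' i))" for i
    using Inr_stuck_contra[OF _ N(2)] by blast
  have le: "snd (?p' i) \<le> r" for i by (rule clock_bound[OF mu' v1 s' E']) (use s in simp)
  have lt: "snd (?p' i) < r" for i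
  proof (cases "i \<ge> N")
    case True then show ?thesis using N(2)[OF True] le[of "Suc i"] by simp
  next
    case False
    then have "snd (?p' i) \<le> snd (?p' N)" using clock_mono[OF mu' v1 s' E'] by simp
    then show ?thesis using N(2)[of N] le[of "Suc N"] by simp
  qed
  let ?tau = "trG mu'"
  let ?p = "pos G e2 s ?tau chi"
  have chiv: "valid_strat G e2 (Lmax G) chi" using chi by (simp add: max_strat_def)
  have tv: "valid_strat G e2 (Lmin G) ?tau" by (rule trG_valid)
  have H: "hist G' r (inlst s) mu' (trG' chi) n = map inlst (hist G e2 s ?tau chi n)" for n
  proof (rule hist_sim[where f=inlst], simp)
    fix i assume i: "i < n" and Hi: "hist G' r (inlst s) mu' (trG' chi) i = map inlst (hist G e2 s ?tau chi i)"
    let ?h = "hist G e2 s ?tau chi i" let ?c = "?p i"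
    have pc: "?p' i = inlst ?c" using Hi by (rule pos_inlst_hist)
    have cl: "snd ?c < r" using lt[of i] pc by simp
    have cloc: "fst ?c \<in> locs G" using play_valid[OF tv chiv s(1) edgesG] by blast
    have hseq: "hs G' r (inlst ?c) \<longleftrightarrow> hs G e2 ?c" by (rule hs_equiv_lt'[OF cl cloc])
    moreover have "hs G e2 ?c \<longrightarrow> owner G' mu' (trG' chi) (inlst ?c) (map inlst ?h) = inlst (owner G ?tau chi ?c ?h)"
    proof
      assume hc: "hs G e2 ?c"
      have hne: "?h \<noteq> []" by simp
      have lh: "last ?h = ?c" by (simp add: last_hist)
      have succ': "succ G' r (?p' i) (?p' (Suc i))"
        using play_valid[OF mu' v1 s' E', of i] hseq hc pc by auto
      have nxt: "?p' (Suc i) = owner G' mu' (trG' chi) (inlst ?c) (map inlst ?h)"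
        using pos_Suc[of G' r "inlst s" mu' "trG' chi" i] hseq hc pc Hi by simp
      show "owner G' mu' (trG' chi) (inlst ?c) (map inlst ?h) = inlst (owner G ?tau chi ?c ?h)"
      proof (cases "fst ?c \<in> Lmin G")
        case False
        have q: "succ G e2 (last ?h) (chi ?h)" using owner_step[OF tv chiv cloc hc hne lh] False lh by simp
        show ?thesis
        proof (cases "snd (chi ?h) \<le> r")
          case T2: True
          show ?thesis using stepA_le[where sg=chi, OF hne T2 q] False by simp
        next
          case F2: False
          then have "\<not> isl (fst (trG' chi (map inlst ?h))) \<or> snd (trG' chi (map inlst ?h)) = r"
            using stepA_gt'[where sg=chi, OF hne _ _ q] cl lh by simp
          then have "\<not> isl (fst (?p' (Suc i))) \<or> snd (?p' (Suc i)) = r" using nxt False by simp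
          then show ?thesis using isl[of "Suc i"] lt[of "Suc i"] by auto
        qed
      next
        case True
        let ?q' = "mu' (map inlst ?h)"
        have q'eq: "?p' (Suc i) = ?q'" using nxt True by simp
        have sq: "succ G' r (inlst (last ?h)) ?q'" using succ' pc q'eq lh by simp
        have il: "isl (fst ?q')" using isl[of "Suc i"] q'eq by simp
        have "?tau ?h = unl ?q'" by (rule stepB_inl[where sg=mu', OF hne sq il])
        then show ?thesis using True inlst_unl[OF il] by simp
      qed
    qed
    ultimately show "(hs G' r (inlst ?c) \<longleftrightarrow> hs G e2 ?c) \<and>
        (hs G e2 ?c \<longrightarrow> owner G' mu' (trG' chi) (inlst ?c) (map inlst ?h) = inlst (owner G ?tau chi ?c ?h))"
      by blast
  qed
  have pp: "?p' n = inlst (?p n)" for n using H[of n] by (rule pos_inlst_hist)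
  have "zeno_tail G e2 s ?tau chi (Lmax G)"
    unfolding zeno_tail_def using N pp by (intro exI[of _ N]) auto
  then show False using chi tv by (simp add: max_strat_def)
qed

lemma Z2_max:
  assumes chi': "max_strat G' r (inlst s) chi'" and s: "fst s \<in> locs G" "snd s \<le> r"
   and mu: "valid_strat G e2 (Lmin G) mu"
  shows "\<not> zeno_tail G e2 s mu (trG chi') (Lmax G)"
proof
  assume Z: "zeno_tail G e2 s mu (trG chi') (Lmax G)"
  let ?p = "pos G e2 s mu (trG chi')"
  have v1: "valid_strat G e2 (Lmax G) (trG chi')" by (rule trG_valid)
  note E = edgesG
  obtain N where N: "fst (?p N) \<in> Lmax G" "\<And>i. i \<ge> N \<Longrightarrow> snd (?p i) < snd (?p (Suc i))"
    using Z by (auto simp: zeno_tail_def)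
  have le: "snd (?p i) \<le> e2" for i by (rule clock_bound[OF mu v1 s(1) E]) (use s re in simp)
  have ltN: "snd (?p i) < r" if iN: "i \<ge> N" for i
  proof (rule ccontr)
    assume "\<not> ?thesis" then have ge: "r \<le> snd (?p i)" by simp
    have hsc: "hs G e2 (?p i)" and sc: "succ G e2 (?p i) (?p (Suc i))"
      using inc_succ[OF mu v1 s(1) E N(2)[OF iN]] by auto
    have loc: "fst (?p i) = fst (?p N)" by (rule zeno_loc[OF mu v1 s(1) E N(2) iN])
    then have nm: "fst (?p i) \<notin> Lmin G" using N(1) disjG by auto
    let ?h = "hist G e2 s mu (trG chi') i"
    have lh: "last ?h = ?p i" by (simp add: last_hist)
    have nx: "?p (Suc i) = trG chi' ?h" using pos_Suc[of G e2 s mu "trG chi'" i] hsc nm by simp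
    let ?q' = "chi' (map inlst ?h)"
    show False
    proof (cases "isl (fst ?q') \<and> succ G' r (inlst (?p i)) ?q'")
      case True
      then have "?p (Suc i) = unl ?q'" using nx lh unfolding trG_def Let_def by simp
      moreover have "succ G r (?p i) (unl ?q')" using succ'_Inl_src True by blast
      ultimately have "snd (?p (Suc i)) \<le> r \<or> snd (?p (Suc i)) = snd (?p i)"
        unfolding succ_def by auto
      then show False using ge N(2)[OF iN] by auto
    next
      case False
      then have "?p (Suc i) = dflt G e2 ?h" using nx lh ge unfolding trG_def Let_def by auto
      then have "snd (?p (Suc i)) = e2" using dflt_inc[of G e2 ?h] hsc lh N(2)[OF iN] by simp
      then show False using N(2)[of "Suc i"] le[of "Suc (Suc i)"] iN by simp
    qed
  qed
  have lt: "snd (?p i) < r" for i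
  proof (cases "i \<ge> N")
    case True then show ?thesis by (rule ltN)
  next
    case False
    then have "snd (?p i) \<le> snd (?p N)" using clock_mono[OF mu v1 s(1) E] by simp
    then show ?thesis using ltN[of N] by simp
  qed
  let ?tau = "trG' mu"
  let ?p' = "pos G' r (inlst s) ?tau chi'"
  have chiv: "valid_strat G' r (Lmax G') chi'" using chi' by (simp add: max_strat_def)
  have tv: "valid_strat G' r (Lmin G') ?tau" by (rule trG'_valid)
  have H: "hist G' r (inlst s) ?tau chi' n = map inlst (hist G e2 s mu (trG chi') n)" for n
  proof (rule hist_sim[where f=inlst], simp)
    fix i assume i: "i < n" and Hi: "hist G' r (inlst s) ?tau chi' i = map inlst (hist G e2 s mu (trG chi') i)"
    let ?h = "hist G e2 s mu (trG chi') i" let ?c = "?p i"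
    have pc: "?p' i = inlst ?c" using Hi by (rule pos_inlst_hist)
    have cl: "snd ?c < r" using lt[of i] by simp
    have cloc: "fst ?c \<in> locs G" using play_valid[OF mu v1 s(1) E] by blast
    have hseq: "hs G' r (inlst ?c) \<longleftrightarrow> hs G e2 ?c" by (rule hs_equiv_lt'[OF cl cloc])
    moreover have "hs G e2 ?c \<longrightarrow> owner G' ?tau chi' (inlst ?c) (map inlst ?h) = inlst (owner G mu (trG chi') ?c ?h)"
    proof
      assume hc: "hs G e2 ?c"
      have hne: "?h \<noteq> []" by simp
      have lh: "last ?h = ?c" by (simp add: last_hist)
      have nxt: "?p (Suc i) = owner G mu (trG chi') ?c ?h"
        using pos_Suc[of G e2 s mu "trG chi'" i] hc by simp
      show "owner G' ?tau chi' (inlst ?c) (map inlst ?h) = inlst (owner G mu (trG chi') ?c ?h)"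
      proof (cases "fst ?c \<in> Lmin G")
        case True
        have q: "succ G e2 (last ?h) (mu ?h)" using owner_step[OF mu v1 cloc hc hne lh] True lh by simp
        have "snd (mu ?h) \<le> r" using lt[of "Suc i"] nxt True by simp
        then show ?thesis using stepA_le[where sg=mu, OF hne _ q] True by simp
      next
        case False
        have mx: "fst (inlst ?c) \<in> Lmax G'" using False cloc by (auto simp: locs_def)
        let ?q' = "chi' (map inlst ?h)"
        have hs': "hs G' r (last (map inlst ?h))" using hseq hc lh hne by (simp add: last_map_inlst)
        have "succ G' r (last (map inlst ?h)) ?q'"
          using chiv mx hs' lh hne unfolding valid_strat_def hs_def
          by (metis Nil_is_map_conv last_map_inlst)
        then have sq: "succ G' r (inlst (last ?h)) ?q'" using hne by (simp add: last_map_inlst)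
        show ?thesis
        proof (cases "isl (fst ?q')")
          case True
          have "trG chi' ?h = unl ?q'" by (rule stepB_inl[where sg=chi', OF hne sq True])
          then show ?thesis using False inlst_unl[OF True] by simp
        next
          case F2: False
          have "trG chi' ?h = (fst ?c, r)" using stepB_exit[where sg=chi', OF hne sq F2] cl lh by simp
          then have "snd (?p (Suc i)) = r" using nxt False by simp
          then show ?thesis using lt[of "Suc i"] by simp
        qed
      qed
    qed
    ultimately show "(hs G' r (inlst ?c) \<longleftrightarrow> hs G e2 ?c) \<and>
        (hs G e2 ?c \<longrightarrow> owner G' ?tau chi' (inlst ?c) (map inlst ?h) = inlst (owner G mu (trG chi') ?c ?h))"
      by blast
  qed
  have pp: "?p' n = inlst (?p n)" for n using H[of n] by (rule pos_inlst_hist)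
  have "zeno_tail G' r (inlst s) ?tau chi' (Lmax G')"
    unfolding zeno_tail_def using N pp by (intro exI[of _ N]) auto
  then show False using chi' tv by (simp add: max_strat_def)
qed


lemma Z2_min:
  assumes mu': "min_strat G' r (inlst s) mu'" and s: "fst s \<in> locs G" "snd s \<le> r"
   and chi: "valid_strat G e2 (Lmax G) chi"
  shows "\<not> zeno_tail G e2 s (trG mu') chi (Lmin G)"
proof
  assume Z: "zeno_tail G e2 s (trG mu') chi (Lmin G)"
  let ?p = "pos G e2 s (trG mu') chi"
  have v1: "valid_strat G e2 (Lmin G) (trG mu')" by (rule trG_valid)
  note E = edgesG
  obtain N where N: "fst (?p N) \<in> Lmin G" "\<And>i. i \<ge> N \<Longrightarrow> snd (?p i) < snd (?p (Suc i))"
    using Z by (auto simp: zeno_tail_def)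
  have le: "snd (?p i) \<le> e2" for i by (rule clock_bound[OF v1 chi s(1) E]) (use s re in simp)
  have ltN: "snd (?p i) < r" if iN: "i \<ge> N" for i
  proof (rule ccontr)
    assume "\<not> ?thesis" then have ge: "r \<le> snd (?p i)" by simp
    have hsc: "hs G e2 (?p i)" and sc: "succ G e2 (?p i) (?p (Suc i))"
      using inc_succ[OF v1 chi s(1) E N(2)[OF iN]] by auto
    have loc: "fst (?p i) = fst (?p N)" by (rule zeno_loc[OF v1 chi s(1) E N(2) iN])
    then have nm: "fst (?p i) \<in> Lmin G" using N(1) by auto
    let ?h = "hist G e2 s (trG mu') chi i"
    have lh: "last ?h = ?p i" by (simp add: last_hist)
    have nx: "?p (Suc i) = trG mu' ?h" using pos_Suc[of G e2 s "trG mu'" chi i] hsc nm by simp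
    let ?q' = "mu' (map inlst ?h)"
    show False
    proof (cases "isl (fst ?q') \<and> succ G' r (inlst (?p i)) ?q'")
      case True
      then have "?p (Suc i) = unl ?q'" using nx lh unfolding trG_def Let_def by simp
      moreover have "succ G r (?p i) (unl ?q')" using succ'_Inl_src True by blast
      ultimately have "snd (?p (Suc i)) \<le> r \<or> snd (?p (Suc i)) = snd (?p i)"
        unfolding succ_def by auto
      then show False using ge N(2)[OF iN] by auto
    next
      case False
      then have "?p (Suc i) = dflt G e2 ?h" using nx lh ge unfolding trG_def Let_def by auto
      then have "snd (?p (Suc i)) = e2" using dflt_inc[of G e2 ?h] hsc lh N(2)[OF iN] by simp
      then show False using N(2)[of "Suc i"] le[of "Suc (Suc i)"] iN by simp
    qed
  qed
  have lt: "snd (?p i) < r" for i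
  proof (cases "i \<ge> N")
    case True then show ?thesis by (rule ltN)
  next
    case False
    then have "snd (?p i) \<le> snd (?p N)" using clock_mono[OF v1 chi s(1) E] by simp
    then show ?thesis using ltN[of N] by simp
  qed
  let ?tau = "trG' chi"
  let ?p' = "pos G' r (inlst s) mu' ?tau"
  have muv: "valid_strat G' r (Lmin G') mu'" using mu' by (simp add: min_strat_def)
  have tv: "valid_strat G' r (Lmax G') ?tau" by (rule trG'_valid)
  have H: "hist G' r (inlst s) mu' ?tau n = map inlst (hist G e2 s (trG mu') chi n)" for n
  proof (rule hist_sim[where f=inlst], simp)
    fix i assume i: "i < n" and Hi: "hist G' r (inlst s) mu' ?tau i = map inlst (hist G e2 s (trG mu') chi i)"
    let ?h = "hist G e2 s (trG mu') chi i" let ?c = "?p i"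
    have pc: "?p' i = inlst ?c" using Hi by (rule pos_inlst_hist)
    have cl: "snd ?c < r" using lt[of i] by simp
    have cloc: "fst ?c \<in> locs G" using play_valid[OF v1 chi s(1) E] by blast
    have hseq: "hs G' r (inlst ?c) \<longleftrightarrow> hs G e2 ?c" by (rule hs_equiv_lt'[OF cl cloc])
    moreover have "hs G e2 ?c \<longrightarrow> owner G' mu' ?tau (inlst ?c) (map inlst ?h) = inlst (owner G (trG mu') chi ?c ?h)"
    proof
      assume hc: "hs G e2 ?c"
      have hne: "?h \<noteq> []" by simp
      have lh: "last ?h = ?c" by (simp add: last_hist)
      have nxt: "?p (Suc i) = owner G (trG mu') chi ?c ?h"
        using pos_Suc[of G e2 s "trG mu'" chi i] hc by simp
      show "owner G' mu' ?tau (inlst ?c) (map inlst ?h) = inlst (owner G (trG mu') chi ?c ?h)"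
      proof (cases "fst ?c \<in> Lmin G")
        case False
        have q: "succ G e2 (last ?h) (chi ?h)" using owner_step[OF v1 chi cloc hc hne lh] False lh by simp
        have "snd (chi ?h) \<le> r" using lt[of "Suc i"] nxt False by simp
        then show ?thesis using stepA_le[where sg=chi, OF hne _ q] False by simp
      next
        case True
        have mx: "fst (inlst ?c) \<in> Lmin G'" using True by simp
        let ?q' = "mu' (map inlst ?h)"
        have hs': "hs G' r (last (map inlst ?h))" using hseq hc lh hne by (simp add: last_map_inlst)
        have "succ G' r (last (map inlst ?h)) ?q'"
          using muv mx hs' lh hne unfolding valid_strat_def hs_def
          by (metis Nil_is_map_conv last_map_inlst)
        then have sq: "succ G' r (inlst (last ?h)) ?q'" using hne by (simp add: last_map_inlst)
        show ?thesis
        proof (cases "isl (fst ?q')")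
          case T2: True
          have "trG mu' ?h = unl ?q'" by (rule stepB_inl[where sg=mu', OF hne sq T2])
          then show ?thesis using True inlst_unl[OF T2] by simp
        next
          case F2: False
          have "trG mu' ?h = (fst ?c, r)" using stepB_exit[where sg=mu', OF hne sq F2] cl lh by simp
          then have "snd (?p (Suc i)) = r" using nxt True by simp
          then show ?thesis using lt[of "Suc i"] by simp
        qed
      qed
    qed
    ultimately show "(hs G' r (inlst ?c) \<longleftrightarrow> hs G e2 ?c) \<and>
        (hs G e2 ?c \<longrightarrow> owner G' mu' ?tau (inlst ?c) (map inlst ?h) = inlst (owner G (trG mu') chi ?c ?h))"
      by blast
  qed
  have pp: "?p' n = inlst (?p n)" for n using H[of n] by (rule pos_inlst_hist)
  have "zeno_tail G' r (inlst s) mu' ?tau (Lmin G')"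
    unfolding zeno_tail_def using N pp by (intro exI[of _ N]) auto
  then show False using mu' tv by (simp add: min_strat_def)
qed

end

lemma costp_not_minf: "costp G p \<noteq> -\<infinity>"
  unfolding costp_def by (auto simp: Let_def)

lemma ereal_shift:
  fixes T :: ereal
  assumes "ereal (v - eps) < ereal d + T" "T \<noteq> -\<infinity>"
  shows "ereal (a - d + v) \<le> ereal a + T + ereal eps"
  using assms by (cases T) auto

lemma csum_Suc: "csum G p (Suc n) = csum G p n + real (rate G (fst (p n))) * (snd (p (Suc n)) - snd (p n))"
  by (simp add: csum_def)

lemma csum_cong: "(\<And>i. i \<le> n \<Longrightarrow> p i = q i) \<Longrightarrow> csum G p n = csum G q n"
  unfolding csum_def by (intro sum.cong) auto

context cc begin

lemma trG'_min: "min_strat G e2 s mu \<Longrightarrow> fst s \<in> locs G \<Longrightarrow> snd s \<le> r \<Longrightarrow> min_strat G' r (inlst s) (trG' mu)"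
  unfolding min_strat_def[of G' r] using trG'_valid Z1_min by blast

lemma trG'_max: "max_strat G e2 s chi \<Longrightarrow> fst s \<in> locs G \<Longrightarrow> snd s \<le> r \<Longrightarrow> max_strat G' r (inlst s) (trG' chi)"
  unfolding max_strat_def[of G' r] using trG'_valid Z1_max by blast

lemma trG_max: "max_strat G' r (inlst s) chi' \<Longrightarrow> fst s \<in> locs G \<Longrightarrow> snd s \<le> r \<Longrightarrow> max_strat G e2 s (trG chi')"
  unfolding max_strat_def[of G e2] using trG_valid Z2_max by blast

lemma hs_le_r:
  assumes "goal G (fst c) = None" "snd c \<le> r" "fst c \<in> locs G" "hs G e2 c"
  shows "hs G' r (inlst c)"
proof -
  obtain q where q: "succ G e2 c q" using assms(4) unfolding hs_def by blast
  show ?thesis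
  proof (cases "(fst c, fst q) \<in> edges G \<and> snd q = snd c")
    case True
    then have "succ G r c q" unfolding succ_def by auto
    then show ?thesis using succ'_inlst unfolding hs_def by blast
  next
    case False
    then have "\<not> urgent G (fst c)" using q unfolding succ_def by auto
    then have "nonurgent G (fst c)" using assms(1,3) by (simp add: nonurgent_def)
    then show ?thesis using exit_succ unfolding hs_def by blast
  qed
qed

lemma valid_owner':
  assumes "valid_strat G' r (Lmin G') m'" "valid_strat G' r (Lmax G') c'" "fst c \<in> locs G"
    "hs G' r (inlst c)" "h \<noteq> []" "last h = c"
  shows "succ G' r (inlst c) (owner G' m' c' (inlst c) (map inlst h))"
  using owner_step[OF assms(1,2), of "inlst c" "map inlst h"] assms(3-6)
  by (simp add: last_map_inlst)

lemma V_le_SUP: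
  assumes "l \<in> locs G" "min_strat G e2 (l, r) m2"
  shows "ereal (V l) \<le> (SUP c\<in>{c. max_strat G e2 (l, r) c}. cost G e2 (l, r) m2 c)"
  using V[OF assms(1)] assms(2) unfolding OptCost_def by (metis INF_lower mem_Collect_eq)

lemma exists_near_max:
  assumes "l \<in> locs G" "min_strat G e2 (l, r) m2" "eps > 0"
  shows "\<exists>c. max_strat G e2 (l, r) c \<and> ereal (V l - eps) < cost G e2 (l, r) m2 c"
proof -
  have "ereal (V l - eps) < ereal (V l)" using assms(3) by simp
  also have "\<dots> \<le> (SUP c\<in>{c. max_strat G e2 (l, r) c}. cost G e2 (l, r) m2 c)"
    by (rule V_le_SUP[OF assms(1,2)])
  finally show ?thesis by (simp add: less_SUP_iff)
qed

lemma exists_near_min: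
  assumes "l \<in> locs G" "eps > 0"
  shows "\<exists>m. min_strat G e2 (l, r) m \<and> (SUP c\<in>{c. max_strat G e2 (l, r) c}. cost G e2 (l, r) m c) < ereal (V l + eps)"
proof -
  have "OptCost G r e2 (l, r) < ereal (V l + eps)" using V[OF assms(1)] assms(2) by simp
  then show ?thesis unfolding OptCost_def by (simp add: INF_less_iff)
qed

end

lemma ereal_le_add_eps: "(eps::real) > 0 \<Longrightarrow> (x::ereal) \<noteq> -\<infinity> \<Longrightarrow> x \<le> x + ereal eps"
  by (cases x) auto

lemma cost_not_minf: "cost G e s mu chi \<noteq> -\<infinity>"
  unfolding cost_costp by (rule costp_not_minf)

context cc begin

lemma dir2_main:
  assumes s: "fst s \<in> locs G" "snd s \<le> r" and mu: "min_strat G e2 s mu" and eps: "eps > 0"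
    and chi': "max_strat G' r (inlst s) chi'"
  shows "\<exists>chi. max_strat G e2 s chi \<and> cost G' r (inlst s) (trG' mu) chi' \<le> cost G e2 s mu chi + ereal eps"
proof -
  let ?c1 = "trG chi'"
  have c1: "max_strat G e2 s ?c1" by (rule trG_max[OF chi' s])
  have muv: "valid_strat G e2 (Lmin G) mu" using mu by (simp add: min_strat_def)
  have c1v: "valid_strat G e2 (Lmax G) ?c1" by (rule trG_valid)
  have m'v: "valid_strat G' r (Lmin G') (trG' mu)" by (rule trG'_valid)
  have c'v: "valid_strat G' r (Lmax G') chi'" using chi' by (simp add: max_strat_def)
  have s': "fst (inlst s) \<in> locs G'" using s by simp
  note E = edgesG and E' = edges'_locs
  let ?p = "pos G e2 s mu ?c1"
  let ?p' = "pos G' r (inlst s) (trG' mu) chi'"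
  define ev where "ev i \<longleftrightarrow> gl G (?p i) \<or> \<not> hs G e2 (?p i) \<or> \<not> isl (fst (?p' (Suc i)))" for i
  have ple: "snd (?p' i) \<le> r" for i by (rule clock_bound[OF m'v c'v s' E']) (use s in simp)
  have ploc: "fst (?p i) \<in> locs G" for i using play_valid[OF muv c1v s(1) E] by blast
  have CORR: "hist G' r (inlst s) (trG' mu) chi' n = map inlst (hist G e2 s mu ?c1 n)" if nev: "\<forall>i<n. \<not> ev i" for n
  proof (rule hist_sim[where f=inlst], simp)
    fix i assume i: "i < n" and Hi: "hist G' r (inlst s) (trG' mu) chi' i = map inlst (hist G e2 s mu ?c1 i)"
    let ?h = "hist G e2 s mu ?c1 i" let ?c = "?p i"
    have ne: "\<not> ev i" using nev i by simp
    have pc: "?p' i = inlst ?c" using Hi by (rule pos_inlst_hist)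
    have cl: "snd ?c \<le> r" using ple[of i] pc by simp
    have ng: "goal G (fst ?c) = None" and hc: "hs G e2 ?c" using ne unfolding ev_def gl_def by auto
    have hc': "hs G' r (inlst ?c)" by (rule hs_le_r[OF ng cl ploc hc])
    have hne: "?h \<noteq> []" by simp
    have lh: "last ?h = ?c" by (simp add: last_hist)
    have nxt: "?p' (Suc i) = owner G' (trG' mu) chi' (inlst ?c) (map inlst ?h)"
      using pos_Suc[of G' r "inlst s" "trG' mu" chi' i] hc' pc Hi by simp
    have il: "isl (fst (?p' (Suc i)))" using ne unfolding ev_def by simp
    have "owner G' (trG' mu) chi' (inlst ?c) (map inlst ?h) = inlst (owner G mu ?c1 ?c ?h)"
    proof (cases "fst ?c \<in> Lmin G")
      case True
      have q: "succ G e2 (last ?h) (mu ?h)" using owner_step[OF muv c1v ploc hc hne lh] True lh by simp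
      show ?thesis
      proof (cases "snd (mu ?h) \<le> r")
        case T2: True
        show ?thesis using stepA_le[where sg=mu, OF hne T2 q] True by simp
      next
        case F2: False
        have "trG' mu (map inlst ?h) = exitst (inlst (last ?h))"
          using stepA_gt[where sg=mu, OF hne _ _ q] F2 cl ng ploc lh by simp
        then show ?thesis using il nxt True by (simp add: exitst_def)
      qed
    next
      case False
      let ?q' = "chi' (map inlst ?h)"
      have sq: "succ G' r (inlst (last ?h)) ?q'"
        using valid_owner'[OF m'v c'v ploc hc' hne lh] False lh by simp
      have il2: "isl (fst ?q')" using il nxt False by simp
      have "?c1 ?h = unl ?q'" by (rule stepB_inl[where sg=chi', OF hne sq il2])
      then show ?thesis using False inlst_unl[OF il2] by simp
    qed
    then show "(hs G' r (inlst ?c) \<longleftrightarrow> hs G e2 ?c) \<and>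
       (hs G e2 ?c \<longrightarrow> owner G' (trG' mu) chi' (inlst ?c) (map inlst ?h) = inlst (owner G mu ?c1 ?c ?h))"
      using hc hc' by simp
  qed
  show ?thesis
  proof (cases "\<exists>i. ev i")
    case False
    then have "\<forall>i. \<not> gl G (?p i)" by (auto simp: ev_def)
    then have "cost G e2 s mu ?c1 = \<infinity>" unfolding cost_costp by (intro costp_none) auto
    then show ?thesis using c1 by (intro exI[of _ ?c1]) simp
  next
    case True
    define K where "K = (LEAST i. ev i)"
    have evK: "ev K" using True K_def by (auto intro: LeastI_ex)
    have nev: "\<forall>i<K. \<not> ev i" using K_def not_less_Least by blast
    have HK: "hist G' r (inlst s) (trG' mu) chi' n = map inlst (hist G e2 s mu ?c1 n)" if "n \<le> K" for n
      using CORR nev that by auto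
    have PK: "?p' n = inlst (?p n)" if "n \<le> K" for n using HK[OF that] by (rule pos_inlst_hist)
    have ngl: "\<not> gl G (?p i)" if "i < K" for i using nev that by (auto simp: ev_def)
    have hsi: "hs G e2 (?p i)" if "i < K" for i using nev that by (auto simp: ev_def)
    consider (g) "gl G (?p K)" | (st) "\<not> gl G (?p K)" "\<not> hs G e2 (?p K)"
      | (ex) "\<not> gl G (?p K)" "hs G e2 (?p K)" "\<not> isl (fst (?p' (Suc K)))"
      using evK ev_def by blast
    then show ?thesis
    proof cases
      case g
      have "cost G' r (inlst s) (trG' mu) chi' = cost G e2 s mu ?c1"
        unfolding cost_costp by (rule costp_cong_upto[where n=K]) (use PK g in auto)
      then show ?thesis using c1 ereal_le_add_eps[OF eps cost_not_minf] by (intro exI[of _ ?c1]) simp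
    next
      case st
      have "?p (K + j) = ?p K" for j by (rule stuck_from[OF st(2)])
      then have "\<not> gl G (?p i)" for i
        using ngl st(1) by (cases "i < K") (auto, metis le_add_diff_inverse not_less)
      then have "cost G e2 s mu ?c1 = \<infinity>" unfolding cost_costp by (intro costp_none) auto
      then show ?thesis using c1 by (intro exI[of _ ?c1]) simp
    next
      case ex
      let ?h = "hist G e2 s mu ?c1 K" let ?c = "?p K"
      obtain l y where cK: "?c = (l, y)" by (cases ?c)
      have ng: "goal G l = None" using ex(1) cK by (simp add: gl_def)
      have lloc: "l \<in> locs G" using ploc[of K] cK by simp
      have cl: "y \<le> r" using ple[of K] PK[of K] cK by simp
      have hc: "hs G e2 ?c" using ex(2) .
      have hc': "hs G' r (inlst ?c)" using hs_le_r[OF _ _ ploc hc] ng cl cK by simp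
      have hne: "?h \<noteq> []" by simp
      have lh: "last ?h = ?c" by (simp add: last_hist)
      have nxt: "?p' (Suc K) = owner G' (trG' mu) chi' (inlst ?c) (map inlst ?h)"
        using pos_Suc[of G' r "inlst s" "trG' mu" chi' K] hc' PK[of K] HK[of K] by simp
      have sq: "succ G' r (inlst ?c) (?p' (Suc K))"
        using valid_owner'[OF m'v c'v ploc hc' hne lh] nxt by simp
      have exq: "?p' (Suc K) = exitst (inlst ?c)" and nu: "nonurgent G l"
        using succ'_cases[OF sq] ex(3) cK by auto
      have nu2: "\<not> urgent G l" using nu by (simp add: nonurgent_def)
      have lenK: "length ?h = Suc K" by (rule hist_length_hs) (use hsi in auto)
      have csK: "csum G' ?p' K = csum G ?p K"
        unfolding csum_def by (intro sum.cong) (use PK in auto)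
      have c': "cost G' r (inlst s) (trG' mu) chi' = ereal (V l + (r - y) * real (rate G l) + csum G ?p K)"
      proof -
        have gl': "gl G' (?p' (Suc K))" using exq cK nu by (simp add: gl_def exitst_inlst)
        have ngl': "\<not> gl G' (?p' i)" if "i < Suc K" for i
        proof -
          have "i \<le> K" using that by simp
          then show ?thesis using PK[of i] ngl[of i] ex(1) by (cases "i < K") (auto simp: gl_def)
        qed
        have "costp G' ?p' = ereal (the (goal G' (fst (?p' (Suc K)))) (snd (?p' (Suc K))) + csum G' ?p' (Suc K))"
          by (rule costp_first[where p="?p'", OF gl' ngl'])
        moreover have "the (goal G' (fst (?p' (Suc K)))) (snd (?p' (Suc K))) = V l + (r - y) * real (rate G l)"
          using exq cK nu by (simp add: exitst_inlst V_def)
        moreover have "csum G' ?p' (Suc K) = csum G ?p K"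
          using csK exq cK PK[of K] by (simp add: csum_Suc exitst_inlst)
        ultimately show ?thesis unfolding cost_costp by simp
      qed
      show ?thesis
      proof (cases "l \<in> Lmin G")
        case True
        let ?q = "mu ?h"
        have qs: "succ G e2 ?c ?q" using owner_step[OF muv c1v ploc hc hne lh] True cK by simp
        have nxtG: "?p (Suc K) = ?q" using pos_Suc[of G e2 s mu ?c1 K] hc True cK by simp
        have gt: "r < snd ?q"
        proof (rule ccontr)
          assume "\<not> ?thesis"
          then have "trG' mu (map inlst ?h) = inlst ?q"
            using stepA_le[where sg=mu, OF hne _] qs lh by simp
          then show False using nxt True ex(3) cK by simp
        qed
        have inc: "snd ?c < snd ?q" using gt cl cK by simp
        have qd: "fst ?q = l" "snd ?q \<le> e2" using succ_inc[OF qs inc] cK by auto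
        obtain z where qz: "?q = (l, z)" using qd(1) by (metis prod.collapse)
        have zr: "r < z" "z \<le> e2" using gt qd qz by auto
        define P where "P = hist G e2 s mu ?c1 (Suc K)"
        have Pe: "P = ?h @ [?q]" unfolding P_def using hist_Suc_hs[OF hc] nxtG by simp
        define H0 where "H0 = [(l, r), ?q]"
        have sH: "succ G e2 (l, r) ?q" using qz zr nu2 by (simp add: succ_def)
        have H0f: "H0 = [(l, r)] \<or> (H0 = [(l, r), ?q] \<and> fst (l, r) \<in> Lmin G \<and> succ G e2 (l, r) ?q)"
          using sH True H0_def by simp
        have L: "last H0 = last P" using Pe H0_def by simp
        let ?m2 = "resid G e2 H0 P mu"
        have m2: "min_strat G e2 (l, r) ?m2"
          by (rule resid_min[OF mu c1v s(1) E P_def[symmetric] H0f L]) (simp add: lloc)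
        obtain c2 where c2: "max_strat G e2 (l, r) c2" "ereal (V l - eps) < cost G e2 (l, r) ?m2 c2"
          using exists_near_max[OF lloc m2 eps] by blast
        let ?ch = "compo P H0 ?c1 c2"
        have chm: "max_strat G e2 s ?ch"
          by (rule compo_max[OF c1 c2(1) s(1) E _ L H0f]) (simp_all add: Pe lloc)
        have lenP: "length P = Suc (Suc K)" using Pe lenK by simp
        have agree: "hist G e2 s mu ?ch n = hist G e2 s mu ?c1 n" if "n \<le> Suc K" for n
        proof (rule hist_agree)
          fix i assume i: "i < n"
          have "length (hist G e2 s mu ?c1 i) \<le> Suc i" by (rule hist_length)
          then have "\<not> prefix P (hist G e2 s mu ?c1 i)"
          proof (intro notI)
            assume "prefix P (hist G e2 s mu ?c1 i)"
            then have "length P \<le> length (hist G e2 s mu ?c1 i)" by (rule prefix_length_le)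
            then show False using lenP i that \<open>length (hist G e2 s mu ?c1 i) \<le> Suc i\<close> by simp
          qed
          then show "owner G mu ?ch (?p i) (hist G e2 s mu ?c1 i) = owner G mu ?c1 (?p i) (hist G e2 s mu ?c1 i)"
            by (simp add: compo_def)
        qed
        have hk: "hist G e2 s mu ?ch (Suc K) = P" using agree[of "Suc K"] P_def by simp
        have r2: "?m2 [(l, r)] = ?q" by (simp add: compo_def force_def strict_prefix_def H0_def)
        have h2': "hist G e2 (l, r) ?m2 c2 (length H0 - 1) = H0"
          by (rule H0_reach_min[of H0 "(l, r)" ?q]) (use sH True r2 H0_def in auto)
        have h2: "hist G e2 (hd H0) ?m2 c2 (length H0 - 1) = H0" using h2' H0_def by simp
        have glu: "pos G e2 s mu ?ch (Suc K + j) = pos G e2 (l, r) ?m2 c2 (1 + j)" for j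
        proof -
          have m2eq: "\<And>t. mu (P @ t) = ?m2 (H0 @ t)" by (simp only: compo_app)
          have cheq: "\<And>t. ?ch (P @ t) = c2 (H0 @ t)" by (simp only: compo_app)
          show ?thesis using pos_glue[OF hk _ L h2 m2eq cheq, of j] by (simp add: H0_def)
        qed
        let ?pc = "pos G e2 s mu ?ch" let ?p2 = "pos G e2 (l, r) ?m2 c2"
        have pcp: "?pc i = ?p i" if "i \<le> Suc K" for i using agree[OF that] by (simp add: pos_def)
        have cost1: "cost G e2 s mu ?ch = ereal (csum G ?pc (Suc K)) + costp G (\<lambda>j. ?pc (Suc K + j))"
          unfolding cost_costp
        proof (rule costp_shift)
          fix i assume "i < Suc K"
          then have "i < K \<or> i = K" by auto
          then show "\<not> gl G (?pc i)" using pcp[of i] ngl[of i] ex(1) \<open>i < Suc K\<close> by auto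
        qed
        have cost2: "cost G e2 (l, r) ?m2 c2 = ereal (csum G ?p2 1) + costp G (\<lambda>j. ?p2 (1 + j))"
          unfolding cost_costp by (rule costp_shift) (simp add: gl_def ng)
        have sh: "(\<lambda>j. ?pc (Suc K + j)) = (\<lambda>j. ?p2 (1 + j))" using glu by (simp add: fun_eq_iff)
        have cs1: "csum G ?pc (Suc K) = csum G ?p K + real (rate G l) * (z - y)"
        proof -
          have "csum G ?pc K = csum G ?p K" by (rule csum_cong) (use pcp in auto)
          then show ?thesis using pcp[of K] pcp[of "Suc K"] nxtG qz cK by (simp add: csum_Suc)
        qed
        have p21: "?p2 1 = ?q" using h2 by (simp add: H0_def pos_def)
        have cs2: "csum G ?p2 1 = real (rate G l) * (z - r)" using p21 qz by (simp add: csum_def)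
        have "ereal ((csum G ?p K + real (rate G l) * (z - y)) - real (rate G l) * (z - r) + V l)
              \<le> ereal (csum G ?p K + real (rate G l) * (z - y)) + costp G (\<lambda>j. ?p2 (1 + j)) + ereal eps"
          by (rule ereal_shift) (use c2(2) cost2 cs2 costp_not_minf in auto)
        moreover have "(csum G ?p K + real (rate G l) * (z - y)) - real (rate G l) * (z - r) + V l
             = V l + (r - y) * real (rate G l) + csum G ?p K" by (simp add: algebra_simps)
        ultimately have "cost G' r (inlst s) (trG' mu) chi' \<le> cost G e2 s mu ?ch + ereal eps"
          using c' cost1 cs1 sh by simp
        then show ?thesis using chm by blast
      next
        case False
        have cx: "?p' (Suc K) = chi' (map inlst ?h)" using nxt False cK by simp
        have sq': "succ G' r (inlst (last ?h)) (chi' (map inlst ?h))" using sq cx lh by simp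
        have nil: "\<not> isl (fst (chi' (map inlst ?h)))" using ex(3) cx by simp
        define k where "k = (if y < r then Suc K else K)"
        have pk: "?p k = (l, r)"
        proof (cases "y < r")
          case True
          have "?c1 ?h = (fst (last ?h), r)" using stepB_exit[where sg=chi', OF hne sq' nil] True lh cK by simp
          then have "?p (Suc K) = (l, r)" using pos_Suc[of G e2 s mu ?c1 K] hc False cK lh by simp
          then show ?thesis using True k_def by simp
        next
          case F: False
          then show ?thesis using cl cK k_def by simp
        qed
        have hsk: "hs G e2 (?p i)" if "i < k" for i
          using that hsi hc k_def by (cases "y < r") (auto simp: less_Suc_eq)
        define P where "P = hist G e2 s mu ?c1 k"
        have lenP: "length P = Suc k" unfolding P_def by (rule hist_length_hs) (use hsk in auto)
        define H0 where "H0 = [(l, r)]"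
        have H0f: "H0 = [(l, r)] \<or> (H0 = [(l, r), (l, r)] \<and> fst (l, r) \<in> Lmin G \<and> succ G e2 (l, r) (l, r))"
          using H0_def by simp
        have L: "last H0 = last P" using pk H0_def P_def by (simp add: last_hist)
        let ?m2 = "resid G e2 H0 P mu"
        have m2: "min_strat G e2 (l, r) ?m2"
          by (rule resid_min[OF mu c1v s(1) E P_def[symmetric] H0f L]) (simp add: lloc)
        obtain c2 where c2: "max_strat G e2 (l, r) c2" "ereal (V l - eps) < cost G e2 (l, r) ?m2 c2"
          using exists_near_max[OF lloc m2 eps] by blast
        let ?ch = "compo P H0 ?c1 c2"
        have chm: "max_strat G e2 s ?ch"
          by (rule compo_max[OF c1 c2(1) s(1) E _ L H0f]) (simp_all add: P_def lloc)
        have agree: "hist G e2 s mu ?ch n = hist G e2 s mu ?c1 n" if "n \<le> k" for n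
        proof (rule hist_agree)
          fix i assume i: "i < n"
          have "length (hist G e2 s mu ?c1 i) \<le> Suc i" by (rule hist_length)
          then have "\<not> prefix P (hist G e2 s mu ?c1 i)"
          proof (intro notI)
            assume "prefix P (hist G e2 s mu ?c1 i)"
            then have "length P \<le> length (hist G e2 s mu ?c1 i)" by (rule prefix_length_le)
            then show False using lenP i that \<open>length (hist G e2 s mu ?c1 i) \<le> Suc i\<close> by simp
          qed
          then show "owner G mu ?ch (?p i) (hist G e2 s mu ?c1 i) = owner G mu ?c1 (?p i) (hist G e2 s mu ?c1 i)"
            by (simp add: compo_def)
        qed
        have hk: "hist G e2 s mu ?ch k = P" using agree[of k] P_def by simp
        have h2: "hist G e2 (hd H0) ?m2 c2 (length H0 - 1) = H0" by (simp add: H0_def)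
        have glu: "pos G e2 s mu ?ch (k + j) = pos G e2 (l, r) ?m2 c2 j" for j
        proof -
          have m2eq: "\<And>t. mu (P @ t) = ?m2 (H0 @ t)" by (simp only: compo_app)
          have cheq: "\<And>t. ?ch (P @ t) = c2 (H0 @ t)" by (simp only: compo_app)
          show ?thesis using pos_glue[OF hk _ L h2 m2eq cheq, of j] by (simp add: H0_def)
        qed
        let ?pc = "pos G e2 s mu ?ch" let ?p2 = "pos G e2 (l, r) ?m2 c2"
        have pcp: "?pc i = ?p i" if "i \<le> k" for i using agree[OF that] by (simp add: pos_def)
        have cost1: "cost G e2 s mu ?ch = ereal (csum G ?pc k) + costp G (\<lambda>j. ?pc (k + j))"
          unfolding cost_costp
        proof (rule costp_shift)
          fix i assume ik: "i < k"
          then have "i \<le> K" using k_def by (cases "y < r") auto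
          then have "i < K \<or> i = K" by auto
          then show "\<not> gl G (?pc i)" using pcp[of i] ngl[of i] ex(1) ik by auto
        qed
        have sh: "(\<lambda>j. ?pc (k + j)) = ?p2" using glu by (simp add: fun_eq_iff)
        have cs1: "csum G ?pc k = csum G ?p K + real (rate G l) * (r - y)"
        proof (cases "y < r")
          case True
          have "csum G ?pc K = csum G ?p K" by (rule csum_cong) (use pcp k_def True in auto)
          then show ?thesis using pcp[of K] pcp[of "Suc K"] pk cK True k_def by (simp add: csum_Suc)
        next
          case F: False
          then have "y = r" using cl by simp
          moreover have "csum G ?pc K = csum G ?p K" by (rule csum_cong) (use pcp k_def F in auto)
          ultimately show ?thesis using k_def F by simp
        qed
        have A: "ereal ((csum G ?p K + real (rate G l) * (r - y)) - 0 + V l)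
              \<le> ereal (csum G ?p K + real (rate G l) * (r - y)) + costp G ?p2 + ereal eps"
          by (rule ereal_shift) (use c2(2) costp_not_minf in \<open>auto simp: cost_costp\<close>)
        have B: "(csum G ?p K + real (rate G l) * (r - y)) - 0 + V l
             = V l + (r - y) * real (rate G l) + csum G ?p K" by (simp add: algebra_simps)
        from A have "ereal (V l + (r - y) * real (rate G l) + csum G ?p K)
              \<le> ereal (csum G ?p K + real (rate G l) * (r - y)) + costp G ?p2 + ereal eps"
          by (simp only: B)
        then have "cost G' r (inlst s) (trG' mu) chi' \<le> cost G e2 s mu ?ch + ereal eps"
          using c' cost1 cs1 sh by simp
        then show ?thesis using chm by blast
      qed
    qed
  qed
qed

end

context cc begin

lemma dir2:
  assumes s: "fst s \<in> locs G" "snd s \<le> r"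
  shows "OptCost G' b r (inlst s) \<le> OptCost G b' e2 s"
proof -
  have "OptCost G' b r (inlst s) \<le> (SUP chi\<in>{chi. max_strat G e2 s chi}. cost G e2 s mu chi)"
    if mu: "min_strat G e2 s mu" for mu
  proof (rule ereal_le_epsilon2)
    fix eps :: real assume eps: "0 < eps"
    have "OptCost G' b r (inlst s) \<le> (SUP c'\<in>{c. max_strat G' r (inlst s) c}. cost G' r (inlst s) (trG' mu) c')"
      unfolding OptCost_def by (rule INF_lower) (simp add: trG'_min[OF mu s])
    also have "\<dots> \<le> (SUP chi\<in>{chi. max_strat G e2 s chi}. cost G e2 s mu chi) + ereal eps"
    proof (rule SUP_least)
      fix c' assume "c' \<in> {c. max_strat G' r (inlst s) c}"
      then obtain chi where chi: "max_strat G e2 s chi"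
          "cost G' r (inlst s) (trG' mu) c' \<le> cost G e2 s mu chi + ereal eps"
        using dir2_main[OF s mu eps] by auto
      have "cost G e2 s mu chi \<le> (SUP chi\<in>{chi. max_strat G e2 s chi}. cost G e2 s mu chi)"
        by (rule SUP_upper) (simp add: chi)
      then show "cost G' r (inlst s) (trG' mu) c' \<le> (SUP chi\<in>{chi. max_strat G e2 s chi}. cost G e2 s mu chi) + ereal eps"
        using chi(2) by (meson add_right_mono order_trans)
    qed
    finally show "OptCost G' b r (inlst s) \<le> (SUP chi\<in>{chi. max_strat G e2 s chi}. cost G e2 s mu chi) + ereal eps" .
  qed
  then show ?thesis unfolding OptCost_def[of G b' e2] by (intro INF_greatest) simp
qed

definition exitAt :: "('l + 'l) strategy \<Rightarrow> 'l state list \<Rightarrow> nat \<Rightarrow> bool" where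
  "exitAt m' h i \<longleftrightarrow> i < length h \<and> fst (h ! i) \<in> Lmin G \<and> snd (h ! i) \<le> r \<and>
      \<not> isl (fst (m' (map inlst (take (Suc i) h))))"

definition crossAt :: "'l state list \<Rightarrow> nat \<Rightarrow> bool" where
  "crossAt h i \<longleftrightarrow> Suc i < length h \<and> fst (h ! i) \<notin> Lmin G \<and> snd (h ! i) \<le> r \<and> r < snd (h ! Suc i)"

definition swAt where "swAt m' h i \<longleftrightarrow> exitAt m' h i \<or> crossAt h i"

definition swn where "swn m' h i = (if exitAt m' h i \<and> snd (h ! i) = r then Suc i else Suc (Suc i))"

definition swH0 where "swH0 m' h i = (if exitAt m' h i then [(fst (h ! i), r)] else [(fst (h ! i), r), h ! Suc i])"

definition sw0 where "sw0 m' h = (LEAST i. swAt m' h i)"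

definition inM2 where "inM2 m' h \<longleftrightarrow> (\<exists>i. swAt m' h i) \<and> swn m' h (sw0 m' h) \<le> length h \<and>
    last (take (swn m' h (sw0 m' h)) h) = last (swH0 m' h (sw0 m' h))"

definition comp :: "('l + 'l) strategy \<Rightarrow> ('l \<Rightarrow> 'l strategy) \<Rightarrow> 'l strategy" where
  "comp m' m2 h = (if inM2 m' h then
      m2 (fst (h ! sw0 m' h)) (swH0 m' h (sw0 m' h) @ drop (swn m' h (sw0 m' h)) h)
    else trG m' h)"

lemma swH0_ne[simp]: "swH0 m' h i \<noteq> []" by (simp add: swH0_def)

lemma comp_valid:
  assumes "\<And>l. valid_strat G e2 (Lmin G) (m2 l)"
  shows "valid_strat G e2 (Lmin G) (comp m' m2)"
  unfolding valid_strat_def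
proof (intro allI impI)
  fix h :: "'l state list" assume h: "h \<noteq> [] \<and> fst (last h) \<in> Lmin G \<and> (\<exists>s'. succ G e2 (last h) s')"
  show "succ G e2 (last h) (comp m' m2 h)"
  proof (cases "inM2 m' h")
    case True
    let ?i = "sw0 m' h" let ?n = "swn m' h ?i" let ?H = "swH0 m' h ?i"
    have n: "?n \<le> length h" "last (take ?n h) = last ?H" using True by (auto simp: inM2_def)
    have L: "last (?H @ drop ?n h) = last h"
    proof (cases "?n = length h")
      case True then show ?thesis using n h by simp
    next
      case False then show ?thesis using n by (simp add: last_drop)
    qed
    have "succ G e2 (last (?H @ drop ?n h)) (m2 (fst (h ! ?i)) (?H @ drop ?n h))"
      using assms[of "fst (h ! ?i)"] L h unfolding valid_strat_def by (metis append_is_Nil_conv swH0_ne)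
    then show ?thesis using True L by (simp add: comp_def)
  next
    case False
    then show ?thesis using trG_valid[of "Lmin G" m'] h unfolding valid_strat_def by (simp add: comp_def)
  qed
qed


lemma inM2_pref:
  assumes M: "inM2 m' h"
  shows "comp m' m2 (take (swn m' h (sw0 m' h)) h @ t) =
         m2 (fst (h ! sw0 m' h)) (swH0 m' h (sw0 m' h) @ t)"
proof -
  let ?i = "sw0 m' h" let ?n = "swn m' h ?i" let ?H = "swH0 m' h ?i"
  let ?P = "take ?n h" let ?g = "?P @ t"
  have ex: "\<exists>i. swAt m' h i" and nl: "?n \<le> length h" and lst: "last ?P = last ?H"
    using M by (auto simp: inM2_def)
  have swi: "swAt m' h ?i" unfolding sw0_def using ex by (rule LeastI_ex)
  have nsw: "\<not> swAt m' h j" if "j < ?i" for j using that unfolding sw0_def by (rule not_less_Least)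
  have lenP: "length ?P = ?n" using nl by simp
  have iln: "?i < ?n" by (simp add: swn_def)
  have gnth: "?g ! k = h ! k" if "k < ?n" for k using that lenP nl by (simp add: nth_append)
  have gtake: "take (Suc j) ?g = take (Suc j) h" if "Suc j \<le> ?n" for j
    using that lenP by (simp add: take_append min_def)
  have exeq: "exitAt m' ?g j = exitAt m' h j" if "j \<le> ?i" for j
  proof -
    have "j < ?n" using that iln by simp
    then show ?thesis using gnth[of j] gtake[of j] lenP nl unfolding exitAt_def by auto
  qed
  have creq: "crossAt ?g j = crossAt h j" if "j < ?i" for j
  proof -
    have "Suc j < ?n" using that iln by simp
    then show ?thesis using gnth[of j] gnth[of "Suc j"] lenP nl unfolding crossAt_def by auto
  qed
  have swg: "swAt m' ?g ?i"
  proof (cases "exitAt m' h ?i")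
    case True then show ?thesis using exeq[of ?i] by (simp add: swAt_def)
  next
    case False
    then have c: "crossAt h ?i" using swi by (simp add: swAt_def)
    have n2: "?n = Suc (Suc ?i)" using False by (simp add: swn_def)
    have "crossAt ?g ?i" using c gnth[of ?i] gnth[of "Suc ?i"] n2 lenP unfolding crossAt_def by auto
    then show ?thesis by (simp add: swAt_def)
  qed
  have nswg: "\<not> swAt m' ?g j" if "j < ?i" for j
    using nsw[OF that] exeq[of j] creq[OF that] that by (simp add: swAt_def)
  have i0: "sw0 m' ?g = ?i" unfolding sw0_def[of m' ?g]
    by (rule Least_equality) (use swg nswg in \<open>auto simp: not_less[symmetric]\<close>)
  have exi: "exitAt m' ?g ?i = exitAt m' h ?i" by (rule exeq) simp
  have gi: "?g ! ?i = h ! ?i" using iln by (rule gnth)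
  have ng: "swn m' ?g ?i = ?n" using exi gi by (simp add: swn_def)
  have Hg: "swH0 m' ?g ?i = ?H"
  proof (cases "exitAt m' h ?i")
    case True then show ?thesis using exi gi by (simp add: swH0_def)
  next
    case False
    then have n2: "?n = Suc (Suc ?i)" by (simp add: swn_def)
    then show ?thesis using False exi gi gnth[of "Suc ?i"] by (simp add: swH0_def)
  qed
  have tk: "take ?n ?g = ?P" using lenP by simp
  have inM: "inM2 m' ?g" unfolding inM2_def using swg i0 ng Hg tk lst lenP by auto
  have dr: "drop ?n ?g = t" using lenP by simp
  show ?thesis using inM i0 ng Hg dr gi by (simp add: comp_def)
qed


lemma hist_set_locs:
  assumes "valid_strat G e2 (Lmin G) mu" "valid_strat G e2 (Lmax G) chi" "fst s \<in> locs G"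
  shows "x \<in> set (hist G e2 s mu chi k) \<Longrightarrow> fst x \<in> locs G"
proof (induction k arbitrary: x)
  case 0 then show ?case using assms(3) by simp
next
  case (Suc k)
  show ?case
  proof (cases "hs G e2 (pos G e2 s mu chi k)")
    case True
    then have "x \<in> set (hist G e2 s mu chi k) \<or> x = pos G e2 s mu chi (Suc k)"
      using Suc.prems by (auto simp: hist_Suc_hs)
    then show ?thesis using Suc.IH play_valid[OF assms edgesG, of "Suc k"] by blast
  next
    case False
    then show ?thesis using Suc by (simp add: hist_Suc_nhs)
  qed
qed

lemma comp_min:
  assumes mu': "min_strat G' r (inlst s) m'" and s: "fst s \<in> locs G" "snd s \<le> r"
    and m2: "\<And>l. l \<in> locs G \<Longrightarrow> min_strat G e2 (l, r) (m2 l)"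
    and m2v: "\<And>l. valid_strat G e2 (Lmin G) (m2 l)"
  shows "min_strat G e2 s (comp m' m2)"
proof -
  let ?mu = "comp m' m2"
  have v: "valid_strat G e2 (Lmin G) ?mu" by (rule comp_valid[OF m2v])
  moreover have "\<not> zeno_tail G e2 s ?mu chi (Lmin G)" if chi: "valid_strat G e2 (Lmax G) chi" for chi
  proof
    assume Z: "zeno_tail G e2 s ?mu chi (Lmin G)"
    show False
    proof (cases "\<exists>k. inM2 m' (hist G e2 s ?mu chi k)")
      case True
      then obtain k where M: "inM2 m' (hist G e2 s ?mu chi k)" by blast
      let ?h = "hist G e2 s ?mu chi k"
      let ?i = "sw0 m' ?h" let ?n = "swn m' ?h ?i" let ?H = "swH0 m' ?h ?i"
      let ?l = "fst (?h ! ?i)"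
      let ?P = "take ?n ?h"
      have nl: "?n \<le> length ?h" and lst: "last ?P = last ?H" and ex: "\<exists>i. swAt m' ?h i"
        using M by (auto simp: inM2_def)
      have swi: "swAt m' ?h ?i" unfolding sw0_def using ex by (rule LeastI_ex)
      have iln: "?i < ?n" by (simp add: swn_def)
      have Pne: "?P \<noteq> []" using iln nl by (cases ?h) auto
      obtain k0 where k0: "hist G e2 s ?mu chi k0 = ?P"
        using prefix_hist[OF take_is_prefix Pne] by blast
      have hi: "?h ! ?i \<in> set ?h" using iln nl by simp
      have lloc: "?l \<in> locs G" by (rule hist_set_locs[OF v chi s(1) hi])
      have mueq: "\<And>t. ?mu (?P @ t) = m2 ?l (?H @ t)" using inM2_pref[OF M] .
      have hdH: "hd ?H = (?l, r)" by (simp add: swH0_def)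
      let ?c2 = "compo ?H ?P (force G e2 ?H) chi"
      have H0f: "?H = [(?l, r)] \<or> (\<exists>x. ?H = [(?l, r), x] \<and> ?l \<notin> Lmin G \<and> succ G e2 (?l, r) x)"
      proof (cases "exitAt m' ?h ?i")
        case True then show ?thesis by (simp add: swH0_def)
      next
        case False
        then have c: "crossAt ?h ?i" using swi by (simp add: swAt_def)
        have n2: "?n = Suc (Suc ?i)" using False by (simp add: swn_def)
        have sp: "strict_prefix (take (Suc ?i) ?P) ?P"
        proof -
          have l1: "length (take (Suc ?i) ?P) = Suc ?i" using n2 nl by simp
          have l2: "length ?P = Suc (Suc ?i)" using n2 nl by simp
          have A: "prefix (take (Suc ?i) ?P) ?P" by (rule take_is_prefix)
          have B: "take (Suc ?i) ?P \<noteq> ?P"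
          proof
            assume "take (Suc ?i) ?P = ?P"
            then have "length (take (Suc ?i) ?P) = length ?P" by simp
            then show False using l1 l2 by simp
          qed
          show ?thesis using A B by (simp add: strict_prefix_def)
        qed
        have sc: "succ G e2 (last (take (Suc ?i) ?P)) (?P ! length (take (Suc ?i) ?P))"
          by (rule force_succ[OF v chi s(1) edgesG k0 sp]) (simp add: n2)
        have e1: "last (take (Suc ?i) ?P) = ?h ! ?i"
        proof -
          have "?i < length ?P" using n2 nl by simp
          then have "take (Suc ?i) ?P = take ?i ?P @ [?P ! ?i]" by (rule take_Suc_conv_app_nth)
          then show ?thesis using n2 nl by simp
        qed
        have e2': "?P ! length (take (Suc ?i) ?P) = ?h ! Suc ?i" using n2 nl by simp
        have sc2: "succ G e2 (?h ! ?i) (?h ! Suc ?i)" using sc e1 e2' by simp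
        have inc: "snd (?h ! ?i) < snd (?h ! Suc ?i)" using c unfolding crossAt_def by simp
        have d: "fst (?h ! Suc ?i) = ?l \<and> \<not> urgent G ?l \<and> snd (?h ! Suc ?i) \<le> e2"
          using succ_inc[OF sc2 inc] by simp
        have xe: "?h ! Suc ?i = (?l, snd (?h ! Suc ?i))" using d by (metis prod.collapse)
        have "succ G e2 (?l, r) (?l, snd (?h ! Suc ?i))" using d c unfolding succ_def crossAt_def by simp
        then have "succ G e2 (?l, r) (?h ! Suc ?i)" using xe by simp
        then show ?thesis using False c by (simp add: swH0_def crossAt_def)
      qed
      have fsH: "\<And>g. strict_prefix g ?H \<Longrightarrow> g \<noteq> [] \<Longrightarrow> succ G e2 (last g) (?H ! length g)"
      proof -
        fix g assume g: "strict_prefix g ?H" "g \<noteq> []"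
        from H0f show "succ G e2 (last g) (?H ! length g)"
        proof
          assume "?H = [(?l, r)]" then show ?thesis using g by (auto simp: strict_prefix_def prefix_Cons)
        next
          assume "\<exists>x. ?H = [(?l, r), x] \<and> ?l \<notin> Lmin G \<and> succ G e2 (?l, r) x"
          then obtain x where "?H = [(?l, r), x]" "succ G e2 (?l, r) x" by blast
          then show ?thesis using g by (auto simp: strict_prefix_def prefix_Cons)
        qed
      qed
      have c2v: "valid_strat G e2 (Lmax G) ?c2"
        by (rule compo_valid[OF force_valid[OF fsH] chi]) (use lst Pne in auto)
      have h2: "hist G e2 (?l, r) (m2 ?l) ?c2 (length ?H - 1) = ?H"
      proof -
        from H0f show ?thesis
        proof
          assume "?H = [(?l, r)]" then show ?thesis by simp
        next
          assume "\<exists>x. ?H = [(?l, r), x] \<and> ?l \<notin> Lmin G \<and> succ G e2 (?l, r) x"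
          then obtain x where x: "?H = [(?l, r), x]" "?l \<notin> Lmin G" "succ G e2 (?l, r) x" by blast
          have cx: "?c2 [(?l, r)] = x" using x(1) by (simp add: compo_def force_def strict_prefix_def)
          show ?thesis by (rule H0_reach_max[where q=x]) (use x cx in simp)
        qed
      qed
      have h2': "hist G e2 (hd ?H) (m2 ?l) ?c2 (length ?H - 1) = ?H" using h2 hdH by simp
      have cheq: "\<And>t. chi (?P @ t) = ?c2 (?H @ t)" by (simp only: compo_app)
      have g: "pos G e2 s ?mu chi (k0 + j) = pos G e2 (hd ?H) (m2 ?l) ?c2 ((length ?H - 1) + j)" for j
        by (rule pos_glue[OF k0 swH0_ne lst[symmetric] h2' mueq cheq])
      have "zeno_tail G e2 (hd ?H) (m2 ?l) ?c2 (Lmin G)"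
        by (rule zeno_glue[of G e2 ?mu chi s k0 G e2 "hd ?H" "m2 ?l" ?c2 "length ?H - 1"])
           (use v chi s edgesG g Z in auto)
      then show False using m2[OF lloc] c2v hdH by (simp add: min_strat_def)
    next
      case False
      have "hist G e2 s (trG m') chi n = hist G e2 s ?mu chi n" for n
        by (rule hist_agree) (use False in \<open>auto simp: comp_def\<close>)
      then have "pos G e2 s (trG m') chi n = pos G e2 s ?mu chi n" for n by (simp add: pos_def)
      then have "zeno_tail G e2 s (trG m') chi (Lmin G)" using Z by (simp add: zeno_tail_def)
      then show False using Z2_min[OF mu' s chi] by simp
    qed
  qed
  ultimately show ?thesis by (simp add: min_strat_def)
qed

end

lemma hist_take_pos:
  assumes "\<And>k. k < i \<Longrightarrow> hs G e (pos G e s mu chi k)" "j \<le> i"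
  shows "take (Suc j) (hist G e s mu chi i) = hist G e s mu chi j \<and> hist G e s mu chi i ! j = pos G e s mu chi j"
proof -
  have p: "prefix (hist G e s mu chi j) (hist G e s mu chi i)" by (rule hist_prefix[OF assms(2)])
  have l: "length (hist G e s mu chi j) = Suc j" by (rule hist_length_hs) (use assms in auto)
  then have t: "take (Suc j) (hist G e s mu chi i) = hist G e s mu chi j" using p
    by (metis append_eq_conv_conj prefix_def)
  have "hist G e s mu chi i ! j = hist G e s mu chi j ! j" using p l
    by (metis lessI nth_take t)
  also have "\<dots> = last (hist G e s mu chi j)" using l by (simp add: last_conv_nth)
  finally show ?thesis using t by (simp add: last_hist)
qed

lemma ereal_shift2:
  fixes T :: ereal
  assumes "ereal d + T < ereal (v + eps)"
  shows "ereal a + T \<le> ereal (a - d + v) + ereal eps"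
  using assms by (cases T) auto

context cc begin

lemma exit_cost:
  fixes q :: "nat \<Rightarrow> 'l state"
  assumes PK: "\<And>i. i \<le> K \<Longrightarrow> p' i = inlst (q i)" and ng: "\<And>i. i \<le> K \<Longrightarrow> \<not> gl G (q i)"
    and ex: "p' (Suc K) = exitst (inlst (q K))" and nu: "nonurgent G (fst (q K))"
  shows "costp G' p' = ereal (V (fst (q K)) + (r - snd (q K)) * real (rate G (fst (q K))) + csum G q K)"
proof -
  have gl': "gl G' (p' (Suc K))" using ex nu by (simp add: gl_def exitst_inlst)
  have ngl': "\<not> gl G' (p' i)" if "i < Suc K" for i using PK[of i] ng[of i] that by (simp add: gl_def)
  have "costp G' p' = ereal (the (goal G' (fst (p' (Suc K)))) (snd (p' (Suc K))) + csum G' p' (Suc K))"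
    by (rule costp_first[where p=p', OF gl' ngl'])
  moreover have "the (goal G' (fst (p' (Suc K)))) (snd (p' (Suc K))) = V (fst (q K)) + (r - snd (q K)) * real (rate G (fst (q K)))"
    using ex nu by (simp add: exitst_inlst V_def)
  moreover have "csum G' p' K = csum G q K"
    unfolding csum_def by (intro sum.cong) (use PK in auto)
  then have "csum G' p' (Suc K) = csum G q K"
    using ex PK[of K] by (simp add: csum_Suc exitst_inlst)
  ultimately show ?thesis by simp
qed

end

context cc begin

lemma dir1_main:
  assumes s: "fst s \<in> locs G" "snd s \<le> r" and mu': "min_strat G' r (inlst s) m'" and eps: "eps > 0"
    and m2: "\<And>l. l \<in> locs G \<Longrightarrow> min_strat G e2 (l, r) (m2 l) \<and>
        (SUP c\<in>{c. max_strat G e2 (l, r) c}. cost G e2 (l, r) (m2 l) c) < ereal (V l + eps)"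
    and m2v: "\<And>l. valid_strat G e2 (Lmin G) (m2 l)"
    and chi: "max_strat G e2 s chi"
  shows "cost G e2 s (comp m' m2) chi \<le> cost G' r (inlst s) m' (trG' chi) + ereal eps"
proof -
  let ?mu = "comp m' m2"
  let ?m1 = "trG m'"
  let ?c' = "trG' chi"
  have muv: "valid_strat G e2 (Lmin G) ?mu" by (rule comp_valid[OF m2v])
  have m1v: "valid_strat G e2 (Lmin G) ?m1" by (rule trG_valid)
  have chiv: "valid_strat G e2 (Lmax G) chi" using chi by (simp add: max_strat_def)
  have m'v: "valid_strat G' r (Lmin G') m'" using mu' by (simp add: min_strat_def)
  have c'v: "valid_strat G' r (Lmax G') ?c'" by (rule trG'_valid)
  have s': "fst (inlst s) \<in> locs G'" using s by simp
  note E = edgesG and E' = edges'_locs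
  let ?q = "pos G e2 s ?m1 chi"
  let ?p' = "pos G' r (inlst s) m' ?c'"
  define ev where "ev i \<longleftrightarrow> gl G (?q i) \<or> \<not> hs G e2 (?q i) \<or> \<not> isl (fst (?p' (Suc i)))" for i
  have ple: "snd (?p' i) \<le> r" for i by (rule clock_bound[OF m'v c'v s' E']) (use s in simp)
  have qloc: "fst (?q i) \<in> locs G" for i using play_valid[OF m1v chiv s(1) E] by blast
  have CORR: "hist G' r (inlst s) m' ?c' n = map inlst (hist G e2 s ?m1 chi n)" if nev: "\<forall>i<n. \<not> ev i" for n
  proof (rule hist_sim[where f=inlst], simp)
    fix i assume i: "i < n" and Hi: "hist G' r (inlst s) m' ?c' i = map inlst (hist G e2 s ?m1 chi i)"
    let ?h = "hist G e2 s ?m1 chi i" let ?c = "?q i"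
    have ne: "\<not> ev i" using nev i by simp
    have pc: "?p' i = inlst ?c" using Hi by (rule pos_inlst_hist)
    have cl: "snd ?c \<le> r" using ple[of i] pc by simp
    have ng: "goal G (fst ?c) = None" and hc: "hs G e2 ?c" using ne unfolding ev_def gl_def by auto
    have hc': "hs G' r (inlst ?c)" by (rule hs_le_r[OF ng cl qloc hc])
    have hne: "?h \<noteq> []" by simp
    have lh: "last ?h = ?c" by (simp add: last_hist)
    have nxt: "?p' (Suc i) = owner G' m' ?c' (inlst ?c) (map inlst ?h)"
      using pos_Suc[of G' r "inlst s" m' ?c' i] hc' pc Hi by simp
    have il: "isl (fst (?p' (Suc i)))" using ne unfolding ev_def by simp
    have "owner G' m' ?c' (inlst ?c) (map inlst ?h) = inlst (owner G ?m1 chi ?c ?h)"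
    proof (cases "fst ?c \<in> Lmin G")
      case False
      have q: "succ G e2 (last ?h) (chi ?h)" using owner_step[OF m1v chiv qloc hc hne lh] False lh by simp
      show ?thesis
      proof (cases "snd (chi ?h) \<le> r")
        case T2: True
        show ?thesis using stepA_le[where sg=chi, OF hne T2 q] False by simp
      next
        case F2: False
        have "trG' chi (map inlst ?h) = exitst (inlst (last ?h))"
          using stepA_gt[where sg=chi, OF hne _ _ q] F2 cl ng qloc lh by simp
        then show ?thesis using il nxt False by (simp add: exitst_def)
      qed
    next
      case True
      let ?q' = "m' (map inlst ?h)"
      have sq: "succ G' r (inlst (last ?h)) ?q'"
        using valid_owner'[OF m'v c'v qloc hc' hne lh] True lh by simp
      have il2: "isl (fst ?q')" using il nxt True by simp
      have "?m1 ?h = unl ?q'" by (rule stepB_inl[where sg=m', OF hne sq il2])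
      then show ?thesis using True inlst_unl[OF il2] by simp
    qed
    then show "(hs G' r (inlst ?c) \<longleftrightarrow> hs G e2 ?c) \<and>
       (hs G e2 ?c \<longrightarrow> owner G' m' ?c' (inlst ?c) (map inlst ?h) = inlst (owner G ?m1 chi ?c ?h))"
      using hc hc' by simp
  qed
  show ?thesis
  proof (cases "\<exists>i. ev i")
    case False
    then have HA: "?p' n = inlst (?q n)" for n using CORR[of n] pos_inlst_hist by blast
    have "\<forall>i. \<not> gl G (?q i)" using False by (auto simp: ev_def)
    then have "cost G' r (inlst s) m' ?c' = \<infinity>" unfolding cost_costp
      by (intro costp_none) (simp add: HA gl_def)
    then show ?thesis by simp
  next
    case True
    define K where "K = (LEAST i. ev i)"
    have evK: "ev K" using True K_def by (auto intro: LeastI_ex)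
    have nev: "\<forall>i<K. \<not> ev i" using K_def not_less_Least by blast
    have HK: "hist G' r (inlst s) m' ?c' n = map inlst (hist G e2 s ?m1 chi n)" if "n \<le> K" for n
      using CORR nev that by auto
    have PK: "?p' n = inlst (?q n)" if "n \<le> K" for n using HK[OF that] by (rule pos_inlst_hist)
    have ngl: "\<not> gl G (?q i)" if "i < K" for i using nev that by (auto simp: ev_def)
    have hsi: "hs G e2 (?q i)" if "i < K" for i using nev that by (auto simp: ev_def)
    have qle: "snd (?q i) \<le> r" if "i \<le> K" for i using PK[OF that] ple[of i] by simp
    have tp: "take (Suc j) (hist G e2 s ?m1 chi i) = hist G e2 s ?m1 chi j \<and>
              hist G e2 s ?m1 chi i ! j = ?q j" if "j \<le> i" "i \<le> K" for i j
      by (rule hist_take_pos) (use hsi that in auto)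
    have lenq: "length (hist G e2 s ?m1 chi i) = Suc i" if "i \<le> K" for i
      by (rule hist_length_hs) (use hsi that in auto)
    have noex: "\<not> exitAt m' (hist G e2 s ?m1 chi i) j" if "j < K" "j \<le> i" "i \<le> K" for i j
    proof
      assume a: "exitAt m' (hist G e2 s ?m1 chi i) j"
      have mn: "fst (?q j) \<in> Lmin G" using a tp[OF that(2,3)] by (simp add: exitAt_def)
      have "\<not> isl (fst (m' (map inlst (hist G e2 s ?m1 chi j))))" using a tp[OF that(2,3)] by (simp add: exitAt_def)
      moreover have "hs G' r (inlst (?q j))"
        using hs_le_r[OF _ qle qloc hsi] ngl that by (simp add: gl_def)
      then have "?p' (Suc j) = m' (map inlst (hist G e2 s ?m1 chi j))"
        using pos_Suc[of G' r "inlst s" m' ?c' j] PK[of j] HK[of j] mn that by simp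
      ultimately show False using nev that unfolding ev_def by auto
    qed
    have nocr: "\<not> crossAt (hist G e2 s ?m1 chi i) j" if "j < i" "i \<le> K" for i j
    proof
      assume a: "crossAt (hist G e2 s ?m1 chi i) j"
      have "hist G e2 s ?m1 chi i ! Suc j = ?q (Suc j)" using tp[of "Suc j" i] that by simp
      then show False using a qle[of "Suc j"] that unfolding crossAt_def by simp
    qed
    have nosw: "\<not> swAt m' (hist G e2 s ?m1 chi i) j" if "i < K" for i j
    proof (cases "j \<le> i")
      case True
      then show ?thesis using noex[of j i] nocr[of j i] that lenq[of i] unfolding swAt_def crossAt_def
        by (cases "j < i") (auto)
    next
      case False
      then show ?thesis using lenq[of i] that unfolding swAt_def exitAt_def crossAt_def by auto
    qed
    have noM: "\<not> inM2 m' (hist G e2 s ?m1 chi i)" if "i < K" for i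
      using nosw[OF that] by (auto simp: inM2_def)
    have agreeK: "hist G e2 s ?mu chi n = hist G e2 s ?m1 chi n" if "n \<le> K" for n
      by (rule hist_agree) (use noM that in \<open>auto simp: comp_def\<close>)
    have cq: "cost G e2 s ?mu chi = cost G e2 s ?m1 chi" if "gl G (?q K)"
      unfolding cost_costp
      by (rule costp_cong_upto[where n=K]) (use agreeK that in \<open>auto simp: pos_def\<close>)
    consider (g) "gl G (?q K)" | (st) "\<not> gl G (?q K)" "\<not> hs G e2 (?q K)"
      | (ex) "\<not> gl G (?q K)" "hs G e2 (?q K)" "\<not> isl (fst (?p' (Suc K)))"
      using evK ev_def by blast
    then show ?thesis
    proof cases
      case g
      have "cost G' r (inlst s) m' ?c' = cost G e2 s ?m1 chi"
        unfolding cost_costp by (rule costp_cong_upto[where n=K]) (use PK g in auto)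
      then show ?thesis using cq[OF g] ereal_le_add_eps[OF eps cost_not_minf] by simp
    next
      case st
      obtain l y where cK: "?q K = (l, y)" by (cases "?q K")
      have ng: "goal G l = None" using st(1) cK by (simp add: gl_def)
      have lloc: "l \<in> locs G" using qloc[of K] cK by simp
      show ?thesis
      proof (cases "hs G' r (inlst (?q K))")
        case True
        then obtain q' where q': "succ G' r (inlst (?q K)) q'" unfolding hs_def by blast
        from succ'_cases[OF q'] have nu: "nonurgent G l"
        proof
          assume "isl (fst q') \<and> succ G r (?q K) (unl q')"
          then have "hs G e2 (?q K)" using succ_r_e2 unfolding hs_def by blast
          then show ?thesis using st by simp
        qed (use cK in simp)
        have yr: "y = r"
        proof (rule ccontr)
          assume "y \<noteq> r" then have "y < r" using qle[of K] cK by simp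
          then have "succ G e2 (?q K) (l, r)" using nu re cK by (simp add: succ_def nonurgent_def)
          then show False using st(2) unfolding hs_def by blast
        qed
        have "OptCost G r e2 (l, r) = \<infinity>"
          by (rule stuck_opt) (use st(2) cK yr ng in auto)
        then show ?thesis using fin[OF lloc] by simp
      next
        case False
        have "?p' (K + j) = ?p' K" for j by (rule stuck_from) (use False PK[of K] in simp)
        then have "\<not> gl G' (?p' i)" for i
        proof (cases "i \<le> K")
          case True then show ?thesis using PK[OF True] ngl[of i] st(1) by (cases "i < K") (auto simp: gl_def)
        next
          case F: False
          then have "?p' i = ?p' K" using \<open>\<And>j. ?p' (K + j) = ?p' K\<close>[of "i - K"] by simp
          then show ?thesis using PK[of K] st(1) by (simp add: gl_def)
        qed
        then have "cost G' r (inlst s) m' ?c' = \<infinity>" unfolding cost_costp by (intro costp_none) auto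
        then show ?thesis by simp
      qed
    next
      case ex
      let ?h = "hist G e2 s ?m1 chi K" let ?c = "?q K"
      obtain l y where cK: "?c = (l, y)" by (cases ?c)
      have ng: "goal G l = None" using ex(1) cK by (simp add: gl_def)
      have lloc: "l \<in> locs G" using qloc[of K] cK by simp
      have cl: "y \<le> r" using qle[of K] cK by simp
      have hc: "hs G e2 ?c" using ex(2) .
      have hc': "hs G' r (inlst ?c)" using hs_le_r[OF _ _ qloc hc] ng cl cK by simp
      have hne: "?h \<noteq> []" by simp
      have lh: "last ?h = ?c" by (simp add: last_hist)
      have nxt: "?p' (Suc K) = owner G' m' ?c' (inlst ?c) (map inlst ?h)"
        using pos_Suc[of G' r "inlst s" m' ?c' K] hc' PK[of K] HK[of K] by simp
      have sq: "succ G' r (inlst ?c) (?p' (Suc K))"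
        using valid_owner'[OF m'v c'v qloc hc' hne lh] nxt by simp
      have exq: "?p' (Suc K) = exitst (inlst ?c)" and nu: "nonurgent G l"
        using succ'_cases[OF sq] ex(3) cK by auto
      have nu2: "\<not> urgent G l" using nu by (simp add: nonurgent_def)
      have lenK: "length ?h = Suc K" by (rule lenq) simp
      have ngle: "\<not> gl G (?q i)" if "i \<le> K" for i
      proof -
        have "i < K \<or> i = K" using that by auto
        then show ?thesis using ngl[of i] ex(1) by auto
      qed
      have c': "cost G' r (inlst s) m' ?c' = ereal (V l + (r - y) * real (rate G l) + csum G ?q K)"
        unfolding cost_costp using exit_cost[of K ?p' ?q, OF PK ngle exq] nu cK by simp
      have V2: "min_strat G e2 (l, r) (m2 l)" "(SUP c\<in>{c. max_strat G e2 (l, r) c}. cost G e2 (l, r) (m2 l) c) < ereal (V l + eps)"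
        using m2[OF lloc] by auto
      have bound: "cost G e2 (l, r) (m2 l) c2 < ereal (V l + eps)" if "max_strat G e2 (l, r) c2" for c2
      proof -
        have "cost G e2 (l, r) (m2 l) c2 \<le> (SUP c\<in>{c. max_strat G e2 (l, r) c}. cost G e2 (l, r) (m2 l) c)"
          by (rule SUP_upper) (simp add: that)
        then show ?thesis using V2(2) by simp
      qed
      have nosw_P: "\<not> swAt m' (hist G e2 s ?m1 chi k) j"
        if "j < K" "K \<le> k" "\<And>i. i < k \<Longrightarrow> hs G e2 (?q i)" for k j
      proof -
        let ?P = "hist G e2 s ?m1 chi k"
        have tj: "take (Suc j) ?P = hist G e2 s ?m1 chi j \<and> ?P ! j = ?q j"
          by (rule hist_take_pos) (use that in auto)
        have tj2: "?P ! Suc j = ?q (Suc j)"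
          using hist_take_pos[of k G e2 s ?m1 chi "Suc j"] that by auto
        have lk: "length ?P = Suc k" by (rule hist_length_hs) (use that in auto)
        have "\<not> exitAt m' (hist G e2 s ?m1 chi j) j" by (rule noex) (use that in auto)
        moreover have "j < length (hist G e2 s ?m1 chi j)" using lenq[of j] that by simp
        moreover have "hist G e2 s ?m1 chi j ! j = ?q j" using tp[of j j] that by simp
        moreover have "take (Suc j) (hist G e2 s ?m1 chi j) = hist G e2 s ?m1 chi j" using lenq[of j] that by simp
        ultimately have e: "\<not> exitAt m' ?P j" using tj lk that unfolding exitAt_def by auto
        have "\<not> crossAt ?P j" using tj2 qle[of "Suc j"] that unfolding crossAt_def by simp
        then show ?thesis using e by (simp add: swAt_def)
      qed
      show ?thesis
      proof (cases "l \<in> Lmin G")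
        case True
        have mex: "\<not> isl (fst (m' (map inlst ?h)))" using ex(3) nxt True cK by simp
        define k where "k = (if y = r then K else Suc K)"
        have stepK: "?q (Suc K) = (l, r)" if "y < r"
        proof -
          have sq': "succ G' r (inlst (last ?h)) (m' (map inlst ?h))" using sq nxt True cK lh by simp
          have "?m1 ?h = (fst (last ?h), r)" using stepB_exit[where sg=m', OF hne sq' mex] that lh cK by simp
          then show ?thesis using pos_Suc[of G e2 s ?m1 chi K] hc True cK lh by simp
        qed
        define P where "P = hist G e2 s ?m1 chi k"
        have hsk: "hs G e2 (?q i)" if "i < k" for i
        proof -
          have "i < K \<or> i = K" using that k_def by (cases "y = r") auto
          then show ?thesis using hsi hc by auto
        qed
        have kK: "K \<le> k" using k_def by simp
        have lenP: "length P = Suc k" unfolding P_def by (rule hist_length_hs) (use hsk in auto)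
        have tK: "take (Suc K) P = ?h \<and> P ! K = ?q K" unfolding P_def
          by (rule hist_take_pos) (use hsk kK in auto)
        have lastP: "last P = (l, r)"
        proof (cases "y = r")
          case True then show ?thesis using P_def k_def cK by (simp add: last_hist)
        next
          case False then show ?thesis using P_def k_def stepK cl by (simp add: last_hist)
        qed
        have exP: "exitAt m' P K" using mex lenP kK tK cK True cl unfolding exitAt_def by simp
        have s0: "sw0 m' P = K" unfolding sw0_def
          by (rule Least_equality) (use exP nosw_P[OF _ kK hsk] in \<open>auto simp: swAt_def P_def not_less[symmetric]\<close>)
        have snP: "swn m' P K = Suc k" using exP tK cK k_def by (simp add: swn_def)
        have sHP: "swH0 m' P K = [(l, r)]" using exP tK cK by (simp add: swH0_def)
        have inP: "inM2 m' P" unfolding inM2_def using exP s0 snP sHP lenP lastP by (auto simp: swAt_def)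
        have mueq: "\<And>t. ?mu (P @ t) = m2 l ([(l, r)] @ t)"
          using inM2_pref[OF inP] s0 snP sHP lenP tK cK by simp
        have agree: "hist G e2 s ?mu chi n = hist G e2 s ?m1 chi n" if "n \<le> k" for n
        proof (rule hist_agree)
          fix i assume i: "i < n" "hs G e2 (?q i)"
          have "\<not> inM2 m' (hist G e2 s ?m1 chi i)"
          proof (cases "i < K")
            case True then show ?thesis by (rule noM)
          next
            case False
            then have iK: "i = K" and yr: "y \<noteq> r" using i that k_def by (auto split: if_splits)
            have "swn m' ?h (sw0 m' ?h) = Suc (Suc K)"
            proof -
              have exh: "exitAt m' ?h K" using mex lenK cK True cl lh
                unfolding exitAt_def by (simp add: last_conv_nth)
              have "sw0 m' ?h = K" unfolding sw0_def
                by (rule Least_equality) (use exh nosw_P[of _ K] hsi in \<open>auto simp: swAt_def not_less[symmetric]\<close>)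
              then show ?thesis using exh yr lenK cK lh by (simp add: swn_def last_conv_nth)
            qed
            then show ?thesis using iK lenK by (simp add: inM2_def)
          qed
          then show "owner G ?mu chi (?q i) (hist G e2 s ?m1 chi i) = owner G ?m1 chi (?q i) (hist G e2 s ?m1 chi i)"
            by (simp add: comp_def)
        qed
        have hk: "hist G e2 s ?mu chi k = P" using agree[of k] P_def by simp
        let ?H = "[(l, r)]"
        have H0f: "?H = [(l, r)] \<or> (?H = [(l, r), (l, r)] \<and> fst (l, r) \<in> Lmax G \<and> succ G e2 (l, r) (l, r))" by simp
        have L: "last ?H = last P" using lastP by simp
        let ?c2 = "resid G e2 ?H P chi"
        have c2: "max_strat G e2 (l, r) ?c2"
          by (rule resid_max[OF chi muv s(1) E disjG hk H0f L]) (simp add: lloc)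
        have h2: "hist G e2 (hd ?H) (m2 l) ?c2 (length ?H - 1) = ?H" by simp
        have cheq: "\<And>t. chi (P @ t) = ?c2 (?H @ t)" by (simp only: compo_app)
        have glu: "pos G e2 s ?mu chi (k + j) = pos G e2 (l, r) (m2 l) ?c2 j" for j
          using pos_glue[OF hk _ L h2 mueq cheq, of j] by simp
        let ?pm = "pos G e2 s ?mu chi" let ?p2 = "pos G e2 (l, r) (m2 l) ?c2"
        have pmq: "?pm i = ?q i" if "i \<le> k" for i using agree[OF that] by (simp add: pos_def)
        have cost1: "cost G e2 s ?mu chi = ereal (csum G ?pm k) + costp G (\<lambda>j. ?pm (k + j))"
          unfolding cost_costp
        proof (rule costp_shift)
          fix i assume ik: "i < k"
          then have "i \<le> K" using k_def by (cases "y = r") auto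
          then show "\<not> gl G (?pm i)" using pmq[of i] ngle[of i] ik by simp
        qed
        have sh: "(\<lambda>j. ?pm (k + j)) = ?p2" using glu by (simp add: fun_eq_iff)
        have cs1: "csum G ?pm k = csum G ?q K + real (rate G l) * (r - y)"
        proof (cases "y = r")
          case True
          have kk: "k = K" using True k_def by simp
          have "csum G ?pm K = csum G ?q K" by (rule csum_cong) (use pmq kk in auto)
          then show ?thesis using True kk by simp
        next
          case F: False
          then have yl: "y < r" using cl by simp
          have "csum G ?pm K = csum G ?q K" by (rule csum_cong) (use pmq kK in auto)
          then show ?thesis using pmq[of K] pmq[of "Suc K"] stepK[OF yl] cK F k_def by (simp add: csum_Suc)
        qed
        have A: "ereal (csum G ?q K + real (rate G l) * (r - y)) + costp G ?p2
            \<le> ereal ((csum G ?q K + real (rate G l) * (r - y)) - 0 + V l) + ereal eps"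
          by (rule ereal_shift2) (use bound[OF c2] in \<open>simp add: cost_costp\<close>)
        have B: "(csum G ?q K + real (rate G l) * (r - y)) - 0 + V l = V l + (r - y) * real (rate G l) + csum G ?q K"
          by (simp add: algebra_simps)
        have "ereal (csum G ?q K + real (rate G l) * (r - y)) + costp G ?p2
            \<le> ereal (V l + (r - y) * real (rate G l) + csum G ?q K) + ereal eps"
          using A unfolding B .
        then show ?thesis using c' cost1 cs1 sh by simp
      next
        case False
        let ?x = "chi ?h"
        have cx: "?p' (Suc K) = ?c' (map inlst ?h)" using nxt False cK by simp
        have xs: "succ G e2 ?c ?x" using owner_step[OF m1v chiv qloc hc hne lh] False cK by simp
        have nxG: "?q (Suc K) = ?x" using pos_Suc[of G e2 s ?m1 chi K] hc False cK by simp
        have gt: "r < snd ?x"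
        proof (rule ccontr)
          assume "\<not> ?thesis"
          then have "?c' (map inlst ?h) = inlst ?x" using stepA_le[where sg=chi, OF hne _] xs lh by simp
          then show False using cx ex(3) by simp
        qed
        have inc: "snd ?c < snd ?x" using gt cl cK by simp
        have xd: "fst ?x = l" "snd ?x \<le> e2" using succ_inc[OF xs inc] cK by auto
        obtain z where xz: "?x = (l, z)" using xd(1) by (metis prod.collapse)
        have zr: "r < z" "z \<le> e2" using gt xd xz by auto
        define P where "P = hist G e2 s ?m1 chi (Suc K)"
        have Pe: "P = ?h @ [?x]" unfolding P_def using hist_Suc_hs[OF hc] nxG by simp
        have hsk: "hs G e2 (?q i)" if "i < Suc K" for i
        proof -
          have "i < K \<or> i = K" using that by auto
          then show ?thesis using hsi hc by auto
        qed
        have lenP: "length P = Suc (Suc K)" using Pe lenK by simp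
        have PK2: "P ! K = ?c" "P ! Suc K = ?x" using Pe lenK lh by (auto simp: nth_append last_conv_nth)
        have crP: "crossAt P K" using lenP PK2 cK False cl gt unfolding crossAt_def by simp
        have nexP: "\<not> exitAt m' P K" using PK2 cK False unfolding exitAt_def by simp
        have s0: "sw0 m' P = K" unfolding sw0_def
          by (rule Least_equality) (use crP nosw_P[of _ "Suc K"] hsk in \<open>auto simp: swAt_def P_def not_less[symmetric]\<close>)
        have snP: "swn m' P K = Suc (Suc K)" using nexP by (simp add: swn_def)
        have sHP: "swH0 m' P K = [(l, r), ?x]" using nexP PK2 cK by (simp add: swH0_def)
        have inP: "inM2 m' P" unfolding inM2_def using crP s0 snP sHP lenP Pe by (auto simp: swAt_def)
        have mueq: "\<And>t. ?mu (P @ t) = m2 l ([(l, r), ?x] @ t)"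
          using inM2_pref[OF inP] s0 snP sHP lenP PK2 cK by simp
        have agree: "hist G e2 s ?mu chi n = hist G e2 s ?m1 chi n" if "n \<le> Suc K" for n
        proof (rule hist_agree)
          fix i assume i: "i < n" "hs G e2 (?q i)"
          show "owner G ?mu chi (?q i) (hist G e2 s ?m1 chi i) = owner G ?m1 chi (?q i) (hist G e2 s ?m1 chi i)"
          proof (cases "i < K")
            case True then show ?thesis using noM[OF True] by (simp add: comp_def)
          next
            case F: False
            then have "i = K" using i that by simp
            then show ?thesis using False cK by simp
          qed
        qed
        have hk: "hist G e2 s ?mu chi (Suc K) = P" using agree[of "Suc K"] P_def by simp
        let ?H = "[(l, r), ?x]"
        have sH: "succ G e2 (l, r) ?x" using xz zr nu2 by (simp add: succ_def)
        have lmax: "l \<in> Lmax G" using lloc False by (simp add: locs_def)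
        have H0f: "?H = [(l, r)] \<or> (?H = [(l, r), ?x] \<and> fst (l, r) \<in> Lmax G \<and> succ G e2 (l, r) ?x)"
          using sH lmax by simp
        have L: "last ?H = last P" using Pe by simp
        let ?c2 = "resid G e2 ?H P chi"
        have c2: "max_strat G e2 (l, r) ?c2"
          by (rule resid_max[OF chi muv s(1) E disjG hk H0f L]) (simp add: lloc)
        have r2: "?c2 [(l, r)] = ?x" by (simp add: compo_def force_def strict_prefix_def)
        have h2': "hist G e2 (l, r) (m2 l) ?c2 (length ?H - 1) = ?H"
          by (rule H0_reach_max[where q="?x"]) (use sH False r2 in simp)
        have h2: "hist G e2 (hd ?H) (m2 l) ?c2 (length ?H - 1) = ?H" using h2' by simp
        have cheq: "\<And>t. chi (P @ t) = ?c2 (?H @ t)" by (simp only: compo_app)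
        have glu: "pos G e2 s ?mu chi (Suc K + j) = pos G e2 (l, r) (m2 l) ?c2 (1 + j)" for j
          using pos_glue[OF hk _ L h2 mueq cheq, of j] by simp
        let ?pm = "pos G e2 s ?mu chi" let ?p2 = "pos G e2 (l, r) (m2 l) ?c2"
        have pmq: "?pm i = ?q i" if "i \<le> Suc K" for i using agree[OF that] by (simp add: pos_def)
        have cost1: "cost G e2 s ?mu chi = ereal (csum G ?pm (Suc K)) + costp G (\<lambda>j. ?pm (Suc K + j))"
          unfolding cost_costp
        proof (rule costp_shift)
          fix i assume ik: "i < Suc K"
          then show "\<not> gl G (?pm i)" using pmq[of i] ngle[of i] by simp
        qed
        have cost2: "cost G e2 (l, r) (m2 l) ?c2 = ereal (csum G ?p2 1) + costp G (\<lambda>j. ?p2 (1 + j))"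
          unfolding cost_costp by (rule costp_shift) (simp add: gl_def ng)
        have sh: "(\<lambda>j. ?pm (Suc K + j)) = (\<lambda>j. ?p2 (1 + j))" using glu by (simp add: fun_eq_iff)
        have cs1: "csum G ?pm (Suc K) = csum G ?q K + real (rate G l) * (z - y)"
        proof -
          have "csum G ?pm K = csum G ?q K" by (rule csum_cong) (use pmq in auto)
          then show ?thesis using pmq[of K] pmq[of "Suc K"] nxG xz cK by (simp add: csum_Suc)
        qed
        have p21: "?p2 1 = ?x" using h2' by (simp add: pos_def)
        have cs2: "csum G ?p2 1 = real (rate G l) * (z - r)" using p21 xz by (simp add: csum_def)
        have A: "ereal (csum G ?q K + real (rate G l) * (z - y)) + costp G (\<lambda>j. ?p2 (1 + j))
            \<le> ereal ((csum G ?q K + real (rate G l) * (z - y)) - real (rate G l) * (z - r) + V l) + ereal eps"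
          by (rule ereal_shift2) (use bound[OF c2] cost2 cs2 in simp)
        have B: "(csum G ?q K + real (rate G l) * (z - y)) - real (rate G l) * (z - r) + V l
            = V l + (r - y) * real (rate G l) + csum G ?q K" by (simp add: algebra_simps)
        have "ereal (csum G ?q K + real (rate G l) * (z - y)) + costp G (\<lambda>j. ?p2 (1 + j))
            \<le> ereal (V l + (r - y) * real (rate G l) + csum G ?q K) + ereal eps"
          using A unfolding B .
        then show ?thesis using c' cost1 cs1 sh by simp
      qed
    qed
  qed
qed

end

context cc begin

lemma dir1:
  assumes s: "fst s \<in> locs G" "snd s \<le> r"
  shows "OptCost G b e2 s \<le> OptCost G' b' r (inlst s)"
proof -
  have "OptCost G b e2 s \<le> (SUP c'\<in>{c. max_strat G' r (inlst s) c}. cost G' r (inlst s) m' c')"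
    if mu': "min_strat G' r (inlst s) m'" for m'
  proof (rule ereal_le_epsilon2)
    fix eps :: real assume eps: "0 < eps"
    define m2 where "m2 l = (if l \<in> locs G then (SOME m. min_strat G e2 (l, r) m \<and>
        (SUP c\<in>{c. max_strat G e2 (l, r) c}. cost G e2 (l, r) m c) < ereal (V l + eps)) else dflt G e2)" for l
    have m2: "min_strat G e2 (l, r) (m2 l) \<and>
        (SUP c\<in>{c. max_strat G e2 (l, r) c}. cost G e2 (l, r) (m2 l) c) < ereal (V l + eps)"
      if "l \<in> locs G" for l
      using someI_ex[OF exists_near_min[OF that eps]] that by (simp add: m2_def)
    have m2v: "valid_strat G e2 (Lmin G) (m2 l)" for l
    proof (cases "l \<in> locs G")
      case True then show ?thesis using m2[OF True] by (simp add: min_strat_def)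
    next
      case False then show ?thesis by (simp add: m2_def dflt_valid)
    qed
    let ?mu = "comp m' m2"
    have mu: "min_strat G e2 s ?mu" by (rule comp_min[OF mu' s]) (use m2 m2v in auto)
    have "OptCost G b e2 s \<le> (SUP chi\<in>{chi. max_strat G e2 s chi}. cost G e2 s ?mu chi)"
      unfolding OptCost_def by (rule INF_lower) (simp add: mu)
    also have "\<dots> \<le> (SUP c'\<in>{c. max_strat G' r (inlst s) c}. cost G' r (inlst s) m' c') + ereal eps"
    proof (rule SUP_least)
      fix chi assume chi: "chi \<in> {chi. max_strat G e2 s chi}"
      have a: "cost G e2 s ?mu chi \<le> cost G' r (inlst s) m' (trG' chi) + ereal eps"
        by (rule dir1_main[OF s mu' eps]) (use m2 m2v chi in auto)
      have "cost G' r (inlst s) m' (trG' chi) \<le> (SUP c'\<in>{c. max_strat G' r (inlst s) c}. cost G' r (inlst s) m' c')"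
        by (rule SUP_upper) (use trG'_max chi s in auto)
      then show "cost G e2 s ?mu chi \<le> (SUP c'\<in>{c. max_strat G' r (inlst s) c}. cost G' r (inlst s) m' c') + ereal eps"
        using a by (meson add_right_mono order_trans)
    qed
    finally show "OptCost G b e2 s \<le> (SUP c'\<in>{c. max_strat G' r (inlst s) c}. cost G' r (inlst s) m' c') + ereal eps" .
  qed
  then show ?thesis unfolding OptCost_def[of G' b' r] by (intro INF_greatest) simp
qed

lemma main_eq:
  assumes "l \<in> locs G" "x \<le> r"
  shows "OptCost G' b1 r (Inl l, x) = OptCost G b1 e2 (l, x)"
proof -
  have "OptCost G' b1 r (inlst (l, x)) = OptCost G b1 e2 (l, x)"
    using dir1[of "(l, x)" b1 b1] dir2[of "(l, x)" b1 b1] assms by (intro antisym) auto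
  then show ?thesis by (simp add: inlst_def)
qed

end

theorem lemma2:
  fixes G :: "'l game" and b1 r e2 :: real
  assumes "simple_game G"
    and "0 \<le> b1" "b1 \<le> r" "r \<le> e2" "e2 \<le> 1"
    and finite_opt: "\<And>b e l x. 0 \<le> b \<Longrightarrow> b \<le> e \<Longrightarrow> e \<le> 1 \<Longrightarrow> l \<in> locs G \<Longrightarrow> x \<in> {b..e} \<Longrightarrow>
                    \<bar>OptCost G b e (l, x)\<bar> \<noteq> \<infinity>"
  shows "\<forall>l \<in> locs G. \<forall>x \<in> {b1..r} \<union> {r..e2}.
           override (locs G \<times> {b1..r})
             (\<lambda>(l', x'). OptCost (cost_consistent G r e2) b1 r (Inl l', x'))
             (OptCost G r e2) (l, x)
           = OptCost G b1 e2 (l, x)"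
proof -
  interpret cc G b1 r e2
  proof
    show "\<bar>OptCost G r e2 (l, r)\<bar> \<noteq> \<infinity>" if "l \<in> locs G" for l
      using finite_opt[of r e2 l r] that assms(2-5) by simp
  qed (use assms in auto)
  show ?thesis
  proof (intro ballI)
    fix l x assume l: "l \<in> locs G" and x: "x \<in> {b1..r} \<union> {r..e2}"
    show "override (locs G \<times> {b1..r}) (\<lambda>(l', x'). OptCost (cost_consistent G r e2) b1 r (Inl l', x'))
             (OptCost G r e2) (l, x) = OptCost G b1 e2 (l, x)"
    proof (cases "x \<in> {b1..r}")
      case True
      then show ?thesis using main_eq[OF l] l unfolding override_def G'_def by simp
    next
      case False
      then show ?thesis using l unfolding override_def by (auto simp: OptCost_def)
    qed
  qed
qed


end
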